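(* Assume Conditions (C1) and (C2) hold, with $\alpha\in(0,1]$ in (C1). If $$\limsup_{n\to\infty}\frac{\Phi_\Lambda(n)-\Phi_\mu(n)}{n\log n(\log\log n)^2}=-\infty,$$ then the block-counting process $N$ explodes.
   Context: Setting: $\mathbb{N}_+=\{1,2,\dots\}$. $\Lambda$ is a finite measure on $[0,1]$ with $\Lambda(\{1\})=0$, absolutely continuous w.r.t. Lebesgue measure. For $2\le k\le n$, $\lambda_{n,k}=\int_{[0,1]}x^{k-2}(1-x)^{n-k}\Lambda(dx)$ and $\Phi_\Lambda(n)=\sum_{k=2}^n\binom nk\lambda_{n,k}(k-1)$. $\mu$ is a finite measure on $\mathbb{N}_+$ (splitting measure; $\mu(k):=\mu(\{k\})$) and $\Phi_\mu(n)=n\sum_{k=1}^n k\mu(k)$. $N=(N_t)_{t\ge0}$ is the block-counting process of a simple exchangeable fragmentation–coagulation process on partitions of $\mathbb{N}_+$, whose coagulations are those of the $\Lambda$-coalescent (no simultaneous multiple mergers) and whose fragmentations occur at finite rate, each splitting one block into $k+1$ infinite blocks, the image of the fragmentation measure under $\pi\mapsto\#\pi-1$ being $\mu$. Started from $n\in\mathbb{N}_+$ and up to $\tau^+_\infty=\inf\{t>0:N_{t-}=\infty\}$, $N$ is the continuous-time Markov chain on $\mathbb{N}_+$ jumping from $n$ to $n-k+1$ at rate $\binom nk\lambda_{n,k}$ ($2\le k\le n$) and from $n$ to $n+k$ at rate $n\mu(k)$. Explosion: $N$ explodes if, started from any finite $N_0$, $\mathbf{P}(N_t=\infty\text{ for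 some }t>0)=1$. Condition (C1): $\mu(n)\sim b(\log n)^\alpha n^{-2}$ as $n\to\infty$ for constants $b>0,\alpha>0$. Condition (C2): there exist constants $\beta>1$ and $C_1,C_2>0$ such that $C_1(\log\frac1x)^{\beta-1}dx\le\Lambda(dx)\le C_2(\log\frac1x)^{\beta-1}dx$ on $(0,1)$. *)

theory Defs
  imports "HOL-Probability.Probability" "HOL-Library.Landau_Symbols"
begin

text \<open>The measure Lambda on [0,1] is given by its Lebesgue density lam_dens.
  lambda_{n,k} = int_[0,1] x^(k-2) (1-x)^(n-k) Lambda(dx).\<close>
definition lam_nk :: "(real \<Rightarrow> real) \<Rightarrow> nat \<Rightarrow> nat \<Rightarrow> real" where
  "lam_nk lam_dens n k =
     set_lebesgue_integral lborel {0..1} (\<lambda>x. x ^ (k - 2) * (1 - x) ^ (n - k) * lam_dens x)"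

definition Phi_Lambda :: "(real \<Rightarrow> real) \<Rightarrow> nat \<Rightarrow> real" where
  "Phi_Lambda lam_dens n = (\<Sum>k=2..n. real (n choose k) * lam_nk lam_dens n k * (real k - 1))"

text \<open>mu k = mu({k}) for k >= 1 (the value mu 0 is never used).\<close>
definition Phi_mu :: "(nat \<Rightarrow> real) \<Rightarrow> nat \<Rightarrow> real" where
  "Phi_mu mu n = real n * (\<Sum>k=1..n. real k * mu k)"

text \<open>Jump rate of the block-counting process from n to m (states in N_+):
  n -> n-k+1 at rate (n choose k) lambda_{n,k} (2 <= k <= n), n -> n+k at rate n mu(k).\<close>
definition N_rate :: "(real \<Rightarrow> real) \<Rightarrow> (nat \<Rightarrow> real) \<Rightarrow> nat \<Rightarrow> nat \<Rightarrow> real" where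
  "N_rate lam_dens mu n m =
     (if 1 \<le> m \<and> m < n then real (n choose (n - m + 1)) * lam_nk lam_dens n (n - m + 1)
      else if n < m then real n * mu (m - n)
      else 0)"

definition total_rate :: "(nat \<Rightarrow> nat \<Rightarrow> real) \<Rightarrow> nat \<Rightarrow> real" where
  "total_rate r n = (\<Sum>m. r n m)"

text \<open>Jump chain Y with i.i.d. Exp(1) variables E independent of Y, chain started at n0:
  the k-th holding time of the continuous-time chain is E k / total_rate (Y k).\<close>
definition jump_hold_process ::
  "(nat \<Rightarrow> nat \<Rightarrow> real) \<Rightarrow> nat \<Rightarrow> 'a measure \<Rightarrow> (nat \<Rightarrow> 'a \<Rightarrow> nat) \<Rightarrow> (nat \<Rightarrow> 'a \<Rightarrow> real) \<Rightarrow> bool"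
where
  "jump_hold_process r n0 M Y E \<longleftrightarrow>
     prob_space M \<and>
     (\<forall>k. Y k \<in> measurable M (count_space UNIV)) \<and>
     (\<forall>k. E k \<in> borel_measurable M) \<and>
     (\<forall>k (y::nat \<Rightarrow> nat) (t::nat \<Rightarrow> real).
        measure M {x \<in> space M. \<forall>i\<le>k. Y i x = y i \<and> E i x \<le> t i} =
          (if y 0 = n0 then 1 else 0)
          * (\<Prod>i<k. r (y i) (y (Suc i)) / total_rate r (y i))
          * (\<Prod>i\<le>k. if t i \<le> 0 then 0 else 1 - exp (- t i)))"

end

theory Submission
  imports Defs "HOL-Real_Asymp.Real_Asymp"
begin


lemma ln27: "27 \<le> (x::real) \<Longrightarrow> 3 \<le> ln x"
proof -
  assume x: "27 \<le> x"
  have "exp 3 = exp (1::real) ^ 3" by (simp add: exp_of_nat_mult[symmetric])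
  also have "\<dots> \<le> 3 ^ 3" by (intro power_mono exp_le) auto
  finally have "exp 3 \<le> x" using x by simp
  then have "ln (exp 3) \<le> ln x" by (subst ln_le_cancel_iff) (auto intro: order_less_le_trans[OF exp_gt_zero])
  then show "3 \<le> ln x" by simp
qed

lemma lnln_ge1: assumes "27 \<le> (x::real)" shows "1 \<le> ln (ln x)" "1 \<le> ln x"
proof -
  have "3 \<le> ln x" using ln27 assms .
  then have "exp 1 \<le> ln x" using exp_le by linarith
  then have "ln (exp 1) \<le> ln (ln x)" by (subst ln_le_cancel_iff) (auto intro: order_less_le_trans[OF exp_gt_zero])
  then show "1 \<le> ln (ln x)" by simp
  show "1 \<le> ln x" using \<open>3 \<le> ln x\<close> by linarith
qed

definition AF :: "real \<Rightarrow> real" where "AF x = x * ln x * (ln (ln x))\<^sup>2"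

definition dd :: "nat \<Rightarrow> real" where "dd j = 1 / AF (real j)"

lemma AF_ge1: "27 \<le> x \<Longrightarrow> 1 \<le> AF x"
proof -
  assume x: "27 \<le> x"
  have "1 \<le> ln (ln x)" "1 \<le> ln x" using lnln_ge1 x by auto
  then have "1 \<le> (ln (ln x))\<^sup>2" by (simp add: one_le_power)
  moreover have "1 * 1 \<le> x * ln x" using x \<open>1 \<le> ln x\<close> by (intro mult_mono) auto
  ultimately have "1 * 1 \<le> (x * ln x) * (ln (ln x))\<^sup>2" by (intro mult_mono) auto
  then show ?thesis unfolding AF_def by simp
qed

lemma dd_nonneg: "0 \<le> dd j"
  unfolding dd_def AF_def by (cases "j = 0") (auto intro!: divide_nonneg_nonneg mult_nonneg_nonneg)

lemma dd_le1: "27 \<le> j \<Longrightarrow> dd j \<le> 1"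
  unfolding dd_def using AF_ge1[of "real j"] by simp

lemma dd_pos: "27 \<le> j \<Longrightarrow> 0 < dd j"
  unfolding dd_def using AF_ge1[of "real j"] by simp

lemma AF_mono:
  fixes x y :: real
  assumes x: "27 \<le> x" and xy: "x \<le> y"
  shows "AF y \<le> AF x * (1 + (y - x) / x) ^ 4"
proof -
  define t where "t = (y - x) / x"
  have t0: "0 \<le> t" using x xy unfolding t_def by auto
  have yx: "y = x * (1 + t)" using x unfolding t_def by (simp add: field_simps)
  have l1: "1 \<le> ln x" and ll1: "1 \<le> ln (ln x)" using lnln_ge1 x by auto
  have "ln y - ln x \<le> (y - x) / x" using ln_diff_le[of y x] x xy by simp
  then have lny: "ln y \<le> ln x + t" unfolding t_def by simp
  have "1 * t \<le> ln x * t" using l1 t0 by (rule mult_right_mono)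
  then have lny2: "ln y \<le> ln x * (1 + t)" using lny by (simp add: algebra_simps)
  have lnx_le: "ln x \<le> ln y" using x xy by simp
  have "ln (ln y) - ln (ln x) \<le> (ln y - ln x) / ln x" using ln_diff_le[of "ln y" "ln x"] l1 lnx_le by simp
  also have "\<dots> \<le> t / ln x" using lny l1 by (intro divide_right_mono) auto
  also have "\<dots> \<le> t" using l1 t0 by (simp add: divide_le_eq mult_le_cancel_left1)
  also have "\<dots> = 1 * t" by simp
  also have "\<dots> \<le> ln (ln x) * t" using ll1 t0 by (rule mult_right_mono)
  finally have llny: "ln (ln y) \<le> ln (ln x) * (1 + t)" by (simp add: algebra_simps)
  have llpos: "0 \<le> ln (ln y)" using lnln_ge1[of y] x xy by simp
  have sq: "(ln (ln y))\<^sup>2 \<le> (ln (ln x) * (1 + t))\<^sup>2" by (intro power_mono llny llpos)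
  have "AF y = (x * (1 + t)) * ln y * (ln (ln y))\<^sup>2" unfolding AF_def yx ..
  also have "\<dots> \<le> (x * (1 + t)) * (ln x * (1 + t)) * (ln (ln x) * (1 + t))\<^sup>2"
    using x t0 l1 llpos lnx_le
    by (intro mult_mono lny2 sq) auto
  also have "\<dots> = AF x * (1 + t) ^ 4" unfolding AF_def by (simp add: power2_eq_square power4_eq_xxxx)
  finally show ?thesis unfolding t_def .
qed

lemma poly1: "0 \<le> (t::real) \<Longrightarrow> (1 - 4 * t) * (1 + t) ^ 4 \<le> 1"
proof -
  assume t: "0 \<le> t"
  have "(1 - 4 * t) * (1 + t) ^ 4 = 1 - (10 * t^2 + 20 * t^3 + 15 * t^4 + 4 * t^5)"
    by (simp add: algebra_simps power2_eq_square power3_eq_cube power4_eq_xxxx eval_nat_numeral)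
  also have "\<dots> \<le> 1"
  proof -
    have "0 \<le> t^2" "0 \<le> t^3" "0 \<le> t^4" "0 \<le> t^5" using t by auto
    then show ?thesis by linarith
  qed
  finally show ?thesis .
qed

lemma poly2: "0 \<le> (s::real) \<Longrightarrow> s \<le> 1 \<Longrightarrow> (1 + s) ^ 4 \<le> 1 + 15 * s"
proof -
  assume s: "0 \<le> s" "s \<le> 1"
  have "(1 + s) ^ 4 = 1 + s * (4 + 6 * s + 4 * s^2 + s^3)"
    by (simp add: algebra_simps power2_eq_square power3_eq_cube power4_eq_xxxx eval_nat_numeral)
  also have "s * (4 + 6 * s + 4 * s^2 + s^3) \<le> s * 15"
  proof (intro mult_left_mono s(1))
    have "s^2 \<le> 1" "s^3 \<le> 1" using s by (auto intro: power_le_one)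
    then show "4 + 6 * s + 4 * s^2 + s^3 \<le> 15" using s by linarith
  qed
  finally show ?thesis by simp
qed

lemma D1:
  assumes n: "27 \<le> n" and j: "n \<le> j"
  shows "dd n * (1 - 4 * (real j - real n) / real n) \<le> dd j"
proof -
  define t where "t = (real j - real n) / real n"
  have t0: "0 \<le> t" using n j unfolding t_def by auto
  have A: "AF (real j) \<le> AF (real n) * (1 + t) ^ 4" unfolding t_def
    by (rule AF_mono) (use n j in auto)
  have An: "1 \<le> AF (real n)" using AF_ge1 n by simp
  have p: "0 < (1 + t) ^ 4" using t0 by simp
  have "dd n * (1 - 4 * t) = (1 - 4 * t) / AF (real n)" unfolding dd_def by simp
  also have "\<dots> \<le> (1 / (1 + t) ^ 4) / AF (real n)"
  proof (intro divide_right_mono)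
    show "1 - 4 * t \<le> 1 / (1 + t) ^ 4" using poly1[OF t0] p by (simp add: pos_le_divide_eq)
  qed (use An in auto)
  also have "\<dots> = 1 / (AF (real n) * (1 + t) ^ 4)" by simp
  also have "\<dots> \<le> 1 / AF (real j)"
    using A An p AF_ge1[of "real j"] n j by (intro divide_left_mono) auto
  finally show ?thesis unfolding dd_def t_def by (simp add: mult_ac)
qed

lemma D2:
  assumes j: "27 \<le> j" and jn: "j \<le> n" and n2: "n \<le> 2 * j"
  shows "dd j \<le> dd n * (1 + 30 * (real n - real j) / real n)"
proof -
  define s where "s = (real n - real j) / real j"
  have s0: "0 \<le> s" using j jn unfolding s_def by auto
  have s1: "s \<le> 1" using j n2 unfolding s_def by (auto simp: field_simps)
  have A: "AF (real n) \<le> AF (real j) * (1 + s) ^ 4" unfolding s_def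
    by (rule AF_mono) (use j jn in auto)
  have Aj: "1 \<le> AF (real j)" using AF_ge1 j by simp
  have An: "1 \<le> AF (real n)" using AF_ge1 j jn by simp
  have "dd j = 1 / AF (real j)" unfolding dd_def ..
  also have "\<dots> \<le> (1 + s) ^ 4 / AF (real n)"
    using A Aj An s0 by (simp add: field_simps)
  also have "\<dots> \<le> (1 + 15 * s) / AF (real n)"
    using poly2[OF s0 s1] An by (intro divide_right_mono) auto
  also have "1 + 15 * s \<le> 1 + 30 * (real n - real j) / real n"
  proof -
    have h: "(real n - real j) * (real n - 2 * real j) \<le> 0"
      by (rule mult_nonneg_nonpos) (use jn n2 in auto)
    have "s \<le> 2 * (real n - real j) / real n"
      unfolding s_def using j jn n2 h by (auto simp: field_simps algebra_simps)
    then show ?thesis by linarith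
  qed
  then have "(1 + 15 * s) / AF (real n) \<le> (1 + 30 * (real n - real j) / real n) / AF (real n)"
    using An by (intro divide_right_mono) auto
  finally show ?thesis unfolding dd_def by simp
qed


lemma tele:
  assumes j: "27 \<le> j"
  shows "dd (Suc j) \<le> 1 / ln (ln (real j)) - 1 / ln (ln (real (Suc j)))"
proof -
  define x where "x = real j"
  define y where "y = real (Suc j)"
  have x27: "27 \<le> x" and y27: "27 \<le> y" and yx: "y = x + 1" using j unfolding x_def y_def by auto
  have l1x: "1 \<le> ln x" and ll1x: "1 \<le> ln (ln x)" using lnln_ge1[OF x27] by auto
  have l1y: "1 \<le> ln y" and ll1y: "1 \<le> ln (ln y)" using lnln_ge1[OF y27] by auto
  have "ln x - ln y \<le> (x - y) / y" using ln_diff_le[of x y] x27 y27 by simp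
  then have d1: "1 / y \<le> ln y - ln x" using yx by simp
  have lxy: "ln x \<le> ln y" using x27 yx by simp
  have "ln (ln x) - ln (ln y) \<le> (ln x - ln y) / ln y" using ln_diff_le[of "ln x" "ln y"] l1x l1y by simp
  then have "(ln y - ln x) / ln y \<le> ln (ln y) - ln (ln x)" by (simp add: diff_divide_distrib)
  moreover have "(1 / y) / ln y \<le> (ln y - ln x) / ln y" using d1 l1y by (intro divide_right_mono) auto
  ultimately have d2: "1 / (y * ln y) \<le> ln (ln y) - ln (ln x)" by simp
  have llxy: "ln (ln x) \<le> ln (ln y)" using l1x lxy by simp
  have "dd (Suc j) = 1 / (y * ln y * (ln (ln y))\<^sup>2)" unfolding dd_def AF_def y_def ..
  also have "\<dots> \<le> 1 / (y * ln y * (ln (ln x) * ln (ln y)))"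
  proof -
    have pos: "0 < y * ln y * (ln (ln x) * ln (ln y))" using y27 l1y ll1x ll1y ln27[OF y27] by (intro mult_pos_pos) auto
    have "ln (ln x) * ln (ln y) \<le> (ln (ln y))\<^sup>2" unfolding power2_eq_square
      using llxy ll1y by (intro mult_right_mono) auto
    then have le: "y * ln y * (ln (ln x) * ln (ln y)) \<le> y * ln y * (ln (ln y))\<^sup>2"
      using y27 l1y by (intro mult_left_mono) auto
    have pos2: "0 < y * ln y * (ln (ln y))\<^sup>2" using pos le by linarith
    show ?thesis by (rule divide_left_mono[OF le]) (use pos pos2 in auto)
  qed
  also have "\<dots> = (1 / (y * ln y)) / (ln (ln x) * ln (ln y))" by simp
  also have "\<dots> \<le> (ln (ln y) - ln (ln x)) / (ln (ln x) * ln (ln y))"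
    using d2 ll1x ll1y by (intro divide_right_mono) auto
  also have "\<dots> = 1 / ln (ln x) - 1 / ln (ln y)" using ll1x ll1y by (simp add: field_simps)
  finally show ?thesis unfolding x_def y_def .
qed

lemma dd_summable: "summable dd"
proof -
  define h where "h i = 1 / ln (ln (real (i + 27)))" for i
  have "h \<longlonglongrightarrow> 0" unfolding h_def by real_asymp
  then have s: "summable (\<lambda>i. h i - h (Suc i))" by (rule telescope_summable')
  have "summable (\<lambda>i. dd (Suc (i + 27)))"
  proof (rule summable_comparison_test'[OF s])
    fix i :: nat
    show "norm (dd (Suc (i + 27))) \<le> h i - h (Suc i)"
      using tele[of "i + 27"] dd_nonneg unfolding h_def by (simp add: add.commute)
  qed
  then have "summable (\<lambda>i. dd (i + 28))" by (simp add: add.commute)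
  then show ?thesis by (subst summable_iff_shift[symmetric, of _ 28])
qed

definition Sfun :: "nat \<Rightarrow> real" where "Sfun a = (\<Sum>i. dd (i + a))"

lemma Sdiff:
  assumes "a \<le> b"
  shows "Sfun a = (\<Sum>j\<in>{a..<b}. dd j) + Sfun b"
proof -
  have sa: "summable (\<lambda>i. dd (i + a))" using dd_summable by (subst summable_iff_shift)
  have "Sfun a = (\<Sum>i. dd (i + (b - a) + a)) + (\<Sum>i<b - a. dd (i + a))"
    unfolding Sfun_def by (rule suminf_split_initial_segment[OF sa])
  also have "(\<lambda>i. dd (i + (b - a) + a)) = (\<lambda>i. dd (i + b))" using assms by (simp add: add.assoc)
  also have "(\<Sum>i<b - a. dd (i + a)) = (\<Sum>j\<in>{a..<b}. dd j)"
  proof -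
    have "(\<Sum>j\<in>{0 + a..<(b - a) + a}. dd j) = (\<Sum>i\<in>{0..<b - a}. dd (i + a))"
      by (rule sum.shift_bounds_nat_ivl)
    then show ?thesis using assms by (simp add: atLeast0LessThan)
  qed
  finally show ?thesis unfolding Sfun_def by simp
qed

lemma Sfun_nonneg: "0 \<le> Sfun a"
  unfolding Sfun_def using dd_summable dd_nonneg
  by (intro suminf_nonneg) (auto simp: summable_iff_shift)

lemma Sfun_antimono: "a \<le> b \<Longrightarrow> Sfun b \<le> Sfun a"
  using Sdiff[of a b] dd_nonneg by (simp add: sum_nonneg)

lemma Sfun_drop: "a < b \<Longrightarrow> Sfun b + dd a \<le> Sfun a"
proof -
  assume ab: "a < b"
  have "dd a \<le> (\<Sum>j\<in>{a..<b}. dd j)"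
    using ab dd_nonneg by (intro member_le_sum) auto
  then show ?thesis using Sdiff[of a b] ab by simp
qed


definition Rk :: "(real \<Rightarrow> real) \<Rightarrow> nat \<Rightarrow> nat \<Rightarrow> real" where
  "Rk lam n k = real (n choose k) * lam_nk lam n k"

lemma lam_nk_nonneg:
  assumes "\<And>x. x \<in> {0..1} \<Longrightarrow> 0 \<le> lam x"
  shows "0 \<le> lam_nk lam n k"
  unfolding lam_nk_def set_lebesgue_integral_def
  by (intro Bochner_Integration.integral_nonneg) (auto simp: indicator_def intro!: mult_nonneg_nonneg assms)

lemma Rk_nonneg:
  assumes "\<And>x. x \<in> {0..1} \<Longrightarrow> 0 \<le> lam x"
  shows "0 \<le> Rk lam n k"
  unfolding Rk_def using lam_nk_nonneg[OF assms] by simp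

lemma choose_kk: "real (Suc (Suc m) choose Suc (Suc i)) * (real (Suc (Suc i)) * real (Suc i))
    = real (Suc (Suc m)) * real (Suc m) * real (m choose i)"
proof -
  have e1: "(Suc (Suc m) choose Suc (Suc i)) * Suc (Suc i) = Suc (Suc m) * (Suc m choose Suc i)"
    using Suc_times_binomial_eq[of "Suc m" "Suc i"] by simp
  have e2: "(Suc m choose Suc i) * Suc i = Suc m * (m choose i)"
    using Suc_times_binomial_eq[of m i] by simp
  have "(Suc (Suc m) choose Suc (Suc i)) * (Suc (Suc i) * Suc i) = Suc (Suc m) * Suc m * (m choose i)"
    by (metis e1 e2 mult.assoc mult.left_commute)
  then have "real ((Suc (Suc m) choose Suc (Suc i)) * (Suc (Suc i) * Suc i)) = real (Suc (Suc m) * Suc m * (m choose i))"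
    by (simp only:)
  then show ?thesis by (simp only: of_nat_mult)
qed

lemma binom_id:
  "(\<Sum>k=2..n. real (n choose k) * (real k * (real k - 1)) * (x^(k-2) * (1-x)^(n-k))) = real n * (real n - 1)"
proof (cases "n < 2")
  case True
  then have "n = 0 \<or> n = 1" by auto
  then show ?thesis by auto
next
  case False
  then obtain m where n: "n = Suc (Suc m)" by (metis add_2_eq_Suc le_Suc_ex not_less)
  have "(\<Sum>k=2..n. real (n choose k) * (real k * (real k - 1)) * (x^(k-2) * (1-x)^(n-k)))
      = (\<Sum>i=0..m. real (n choose (i+2)) * (real (i+2) * (real (i+2) - 1)) * (x^(i+2-2) * (1-x)^(n-(i+2))))"
  proof -
    have e: "{0+2..m+2} = {2..n}" using n by auto
    show ?thesis
      by (subst e[symmetric]) (rule sum.shift_bounds_cl_nat_ivl)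
  qed
  also have "\<dots> = (\<Sum>i=0..m. real n * (real n - 1) * (real (m choose i) * x^i * (1-x)^(m-i)))"
  proof (intro sum.cong refl)
    fix i
    have "real (n choose (i+2)) * (real (i+2) * (real (i+2) - 1)) = real n * (real n - 1) * real (m choose i)"
      using choose_kk[of m i] by (simp add: n)
    moreover have "n - (i + 2) = m - i" using n by simp
    ultimately show "real (n choose (i+2)) * (real (i+2) * (real (i+2) - 1)) * (x^(i+2-2) * (1-x)^(n-(i+2)))
        = real n * (real n - 1) * (real (m choose i) * x^i * (1-x)^(m-i))" by (simp add: mult_ac)
  qed
  also have "\<dots> = real n * (real n - 1) * (\<Sum>i=0..m. real (m choose i) * x^i * (1-x)^(m-i))"
    by (simp add: sum_distrib_left)
  also have "(\<Sum>i=0..m. real (m choose i) * x^i * (1-x)^(m-i)) = 1"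
  proof -
    have "(x + (1-x))^m = (\<Sum>i\<le>m. real (m choose i) * x^i * (1-x)^(m-i))" by (rule binomial_ring)
    then show ?thesis by (simp add: atMost_atLeast0)
  qed
  finally show ?thesis by simp
qed

lemma sum_Rk_kk:
  assumes lam_meas: "lam \<in> borel_measurable lborel"
    and lam_fin: "set_integrable lborel {0..1} lam"
  shows "(\<Sum>k=2..n. Rk lam n k * (real k * (real k - 1))) = real n * (real n - 1) * set_lebesgue_integral lborel {0..1} lam"
proof -
  define c where "c k = real (n choose k) * (real k * (real k - 1))" for k
  define g where "g k x = indicator {0..1} x *\<^sub>R (x^(k-2) * (1-x)^(n-k) * lam x)" for k x
  have int: "integrable lborel (g k)" for k
  proof (rule Bochner_Integration.integrable_bound)
    show "integrable lborel (\<lambda>x. indicator {0..1} x *\<^sub>R lam x)"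
      using lam_fin unfolding set_integrable_def .
    show "g k \<in> borel_measurable lborel" unfolding g_def using lam_meas by measurable
    show "AE x in lborel. norm (g k x) \<le> norm (indicator {0..1} x *\<^sub>R lam x)"
    proof (intro AE_I2)
      fix x :: real
      show "norm (g k x) \<le> norm (indicator {0..1} x *\<^sub>R lam x)"
      proof (cases "x \<in> {0..1}")
        case True
        have "\<bar>x^(k-2) * (1-x)^(n-k)\<bar> \<le> 1" using True
          by (auto simp: abs_mult intro!: mult_le_one power_le_one)
        then have "\<bar>x^(k-2) * (1-x)^(n-k)\<bar> * \<bar>lam x\<bar> \<le> 1 * \<bar>lam x\<bar>"
          by (rule mult_right_mono) simp
        then show ?thesis using True unfolding g_def by (simp add: abs_mult)
      qed (simp add: g_def)
    qed
  qed
  have "(\<Sum>k=2..n. Rk lam n k * (real k * (real k - 1))) = (\<Sum>k=2..n. integral\<^sup>L lborel (\<lambda>x. c k * g k x))"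
  proof (intro sum.cong refl)
    fix k
    have "integral\<^sup>L lborel (\<lambda>x. c k * g k x) = c k * integral\<^sup>L lborel (g k)"
      by (rule integral_mult_right_zero)
    also have "integral\<^sup>L lborel (g k) = lam_nk lam n k"
      unfolding lam_nk_def set_lebesgue_integral_def g_def ..
    finally have "integral\<^sup>L lborel (\<lambda>x. c k * g k x) = c k * lam_nk lam n k" .
    then show "Rk lam n k * (real k * (real k - 1)) = integral\<^sup>L lborel (\<lambda>x. c k * g k x)"
      unfolding Rk_def c_def by (simp only: mult_ac)
  qed
  also have "\<dots> = integral\<^sup>L lborel (\<lambda>x. \<Sum>k=2..n. c k * g k x)"
    by (rule Bochner_Integration.integral_sum[symmetric]) (use int in auto)
  also have "\<dots> = integral\<^sup>L lborel (\<lambda>x. real n * (real n - 1) * (indicator {0..1} x *\<^sub>R lam x))"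
  proof (intro Bochner_Integration.integral_cong refl)
    fix x :: real
    have "(\<Sum>k=2..n. c k * g k x) = (\<Sum>k=2..n. real (n choose k) * (real k * (real k - 1)) * (x^(k-2) * (1-x)^(n-k))) * (indicator {0..1} x * lam x)"
      unfolding c_def g_def sum_distrib_right by (intro sum.cong refl) simp
    also have "\<dots> = real n * (real n - 1) * (indicator {0..1} x *\<^sub>R lam x)"
      by (simp only: binom_id) simp
    finally show "(\<Sum>k=2..n. c k * g k x) = real n * (real n - 1) * (indicator {0..1} x *\<^sub>R lam x)" .
  qed
  also have "\<dots> = real n * (real n - 1) * set_lebesgue_integral lborel {0..1} lam"
    unfolding set_lebesgue_integral_def by (rule integral_mult_right_zero)
  finally show ?thesis .
qed


lemma Nrate_nonneg:
  assumes lam_nonneg: "\<And>x. x \<in> {0..1} \<Longrightarrow> 0 \<le> lam x" and mu_nonneg: "\<And>k. 1 \<le> k \<Longrightarrow> 0 \<le> mu k"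
  shows "0 \<le> N_rate lam mu n m"
  unfolding N_rate_def using lam_nk_nonneg[OF lam_nonneg] mu_nonneg by auto

lemma Nrate_decomp:
  fixes lam :: "real \<Rightarrow> real" and mu :: "nat \<Rightarrow> real" and \<phi> :: "nat \<Rightarrow> real"
  assumes mu_nonneg: "\<And>k. 1 \<le> k \<Longrightarrow> 0 \<le> mu k" and mu_fin: "summable (\<lambda>k. mu (Suc k))"
    and bd: "\<And>m. \<bar>\<phi> m\<bar> \<le> B" and n: "1 \<le> n"
  shows "summable (\<lambda>i. real n * mu (Suc i) * \<phi> (n + Suc i))"
    and "summable (\<lambda>m. N_rate lam mu n m * \<phi> m)"
    and "(\<Sum>m. N_rate lam mu n m * \<phi> m) = (\<Sum>k=2..n. Rk lam n k * \<phi> (n - k + 1)) + (\<Sum>i. real n * mu (Suc i) * \<phi> (n + Suc i))"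
proof -
  define f where "f m = N_rate lam mu n m * \<phi> m" for m
  have shift: "f (i + Suc n) = real n * mu (Suc i) * \<phi> (n + Suc i)" for i
    unfolding f_def N_rate_def by (simp add: add.commute)
  show s1: "summable (\<lambda>i. real n * mu (Suc i) * \<phi> (n + Suc i))"
  proof (rule summable_comparison_test')
    show "summable (\<lambda>i. real n * B * mu (Suc i))" using mu_fin by (rule summable_mult)
    fix i :: nat
    have "\<bar>real n * mu (Suc i) * \<phi> (n + Suc i)\<bar> = real n * mu (Suc i) * \<bar>\<phi> (n + Suc i)\<bar>"
      using mu_nonneg[of "Suc i"] by (simp add: abs_mult)
    also have "\<dots> \<le> real n * mu (Suc i) * B"
      using mu_nonneg[of "Suc i"] bd by (intro mult_left_mono) auto
    finally show "norm (real n * mu (Suc i) * \<phi> (n + Suc i)) \<le> real n * B * mu (Suc i)" by (simp add: mult_ac)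
  qed
  have sf: "summable f"
    using s1 unfolding shift[symmetric] by (subst summable_iff_shift[symmetric, of _ "Suc n"])
  then show "summable (\<lambda>m. N_rate lam mu n m * \<phi> m)" unfolding f_def .
  have "suminf f = (\<Sum>i. f (i + Suc n)) + sum f {..<Suc n}"
    by (rule suminf_split_initial_segment[OF sf])
  also have "sum f {..<Suc n} = sum f {1..<n}"
    by (rule sum.mono_neutral_right) (auto simp: f_def N_rate_def)
  also have "\<dots> = (\<Sum>k=2..n. Rk lam n k * \<phi> (n - k + 1))"
  proof (rule sum.reindex_bij_witness[of _ "\<lambda>k. n - k + 1" "\<lambda>m. n - m + 1"])
    fix m assume m: "m \<in> {1..<n}"
    show "n - (n - m + 1) + 1 = m" using m by auto
    show "n - m + 1 \<in> {2..n}" using m by auto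
    show "Rk lam n (n - m + 1) * \<phi> (n - (n - m + 1) + 1) = f m"
      using m unfolding f_def N_rate_def Rk_def by auto
  next
    fix k assume k: "k \<in> {2..n}"
    show "n - (n - k + 1) + 1 = k" using k by auto
    show "n - k + 1 \<in> {1..<n}" using k by auto
  qed
  finally have "suminf f = (\<Sum>i. f (i + Suc n)) + (\<Sum>k=2..n. Rk lam n k * \<phi> (n - k + 1))" .
  then have "suminf f = (\<Sum>i. real n * mu (Suc i) * \<phi> (n + Suc i)) + (\<Sum>k=2..n. Rk lam n k * \<phi> (n - k + 1))"
    by (simp only: shift)
  then show "(\<Sum>m. N_rate lam mu n m * \<phi> m) = (\<Sum>k=2..n. Rk lam n k * \<phi> (n - k + 1)) + (\<Sum>i. real n * mu (Suc i) * \<phi> (n + Suc i))"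
    unfolding f_def by (simp only: add.commute)
qed


definition gN :: "nat \<Rightarrow> nat \<Rightarrow> real" where "gN N n = Sfun (max n N)"

lemma gN_nonneg: "0 \<le> gN N n" unfolding gN_def by (rule Sfun_nonneg)
lemma gN_le: "gN N n \<le> Sfun 0" unfolding gN_def by (rule Sfun_antimono) simp
lemma gN_bd: "\<bar>gN N m - gN N n\<bar> \<le> Sfun 0"
  using gN_nonneg[of N m] gN_nonneg[of N n] gN_le[of N m] gN_le[of N n] by linarith

lemma n_dd_le1: "27 \<le> n \<Longrightarrow> real n * dd n \<le> 1"
proof -
  assume n: "27 \<le> n"
  have l: "1 \<le> ln (real n)" "1 \<le> ln (ln (real n))" using lnln_ge1[of "real n"] n by auto
  then have "1 * 1 \<le> ln (real n) * (ln (ln (real n)))\<^sup>2" by (intro mult_mono) (auto simp: one_le_power)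
  then show ?thesis using n unfolding dd_def AF_def by (simp add: field_simps)
qed

lemma up_bound:
  fixes mu :: "nat \<Rightarrow> real"
  assumes mu_nonneg: "\<And>k. 1 \<le> k \<Longrightarrow> 0 \<le> mu k" and mu_fin: "summable (\<lambda>k. mu (Suc k))"
    and N: "27 \<le> N" and n: "N \<le> n"
  shows "(\<Sum>i. real n * mu (Suc i) * (gN N (n + Suc i) - gN N n))
         \<le> - dd n * Phi_mu mu n + 4 * dd n * (\<Sum>k=1..n. (real k)\<^sup>2 * mu k)"
proof -
  define f where "f i = real n * mu (Suc i) * (gN N (n + Suc i) - gN N n)" for i
  have sf: "summable f" unfolding f_def
    by (rule Nrate_decomp(1)[OF mu_nonneg mu_fin, of "\<lambda>m. gN N m - gN N n" "Sfun 0"]) (use gN_bd n N in auto)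
  have gn: "gN N n = Sfun n" using n unfolding gN_def by simp
  have fle0: "f i \<le> 0" for i
  proof -
    have "gN N (n + Suc i) \<le> gN N n" unfolding gN_def using n by (intro Sfun_antimono) auto
    then show ?thesis unfolding f_def using mu_nonneg[of "Suc i"] by (simp add: mult_nonneg_nonpos)
  qed
  have "suminf f = (\<Sum>i. f (i + n)) + sum f {..<n}" by (rule suminf_split_initial_segment[OF sf])
  also have "(\<Sum>i. f (i + n)) \<le> (\<Sum>i. (0::real))"
    by (rule suminf_le) (use fle0 sf in \<open>auto simp: summable_iff_shift\<close>)
  finally have s1: "suminf f \<le> sum f {..<n}" by simp
  have fk: "f i \<le> - dd n * real n * (real (Suc i) * mu (Suc i)) + 4 * dd n * ((real (Suc i))\<^sup>2 * mu (Suc i))"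
    if i: "i < n" for i
  proof -
    define k where "k = Suc i"
    have k: "1 \<le> k" "k \<le> n" using i unfolding k_def by auto
    have "gN N (n + k) = Sfun (n + k)" using n unfolding gN_def by simp
    then have eq: "gN N (n + k) - gN N n = - (\<Sum>j\<in>{n..<n+k}. dd j)" using Sdiff[of n "n + k"] gn by simp
    have "(\<Sum>j\<in>{n..<n+k}. dd n * (1 - 4 * real k / real n)) \<le> (\<Sum>j\<in>{n..<n+k}. dd j)"
    proof (intro sum_mono)
      fix j assume j: "j \<in> {n..<n+k}"
      have "dd n * (1 - 4 * real k / real n) \<le> dd n * (1 - 4 * (real j - real n) / real n)"
        using j dd_nonneg[of n] N n by (intro mult_left_mono) (auto simp: divide_right_mono)
      also have "\<dots> \<le> dd j" using D1[of n j] j N n by auto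
      finally show "dd n * (1 - 4 * real k / real n) \<le> dd j" .
    qed
    then have lo: "real k * dd n * (1 - 4 * real k / real n) \<le> (\<Sum>j\<in>{n..<n+k}. dd j)" by simp
    have "f i = real n * mu k * (- (\<Sum>j\<in>{n..<n+k}. dd j))" unfolding f_def k_def[symmetric] eq by (simp add: k_def)
    also have "\<dots> \<le> real n * mu k * (- (real k * dd n * (1 - 4 * real k / real n)))"
      using lo mu_nonneg[of k] k by (intro mult_left_mono) auto
    also have "\<dots> = - dd n * real n * (real k * mu k) + 4 * dd n * ((real k)\<^sup>2 * mu k)"
      using N n by (simp add: field_simps power2_eq_square)
    finally show ?thesis unfolding k_def .
  qed
  have "sum f {..<n} \<le> (\<Sum>i<n. - dd n * real n * (real (Suc i) * mu (Suc i)) + 4 * dd n * ((real (Suc i))\<^sup>2 * mu (Suc i)))"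
    by (intro sum_mono fk) auto
  also have "\<dots> = (\<Sum>k=1..n. - dd n * real n * (real k * mu k) + 4 * dd n * ((real k)\<^sup>2 * mu k))"
    by (simp only: One_nat_def sum.atLeast1_atMost_eq)
  also have "\<dots> = - dd n * Phi_mu mu n + 4 * dd n * (\<Sum>k=1..n. (real k)\<^sup>2 * mu k)"
    unfolding Phi_mu_def by (subst sum.distrib) (simp add: sum_distrib_left mult_ac sum_negf)
  finally show ?thesis using s1 unfolding f_def by linarith
qed

lemma LT_nonneg:
  fixes lam :: "real \<Rightarrow> real"
  assumes "\<And>x. x \<in> {0..1} \<Longrightarrow> 0 \<le> lam x"
  shows "0 \<le> set_lebesgue_integral lborel {0..1} lam"
  unfolding set_lebesgue_integral_def
  by (intro Bochner_Integration.integral_nonneg) (auto simp: indicator_def intro!: assms)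

lemma down_term:
  assumes n: "N \<le> n" "54 \<le> n" and k: "2 \<le> k" "k \<le> n"
  shows "gN N (n - k + 1) - gN N n
     \<le> (real k - 1) * dd n + (30 * dd n / real n + 4 * Sfun 0 / (real n)\<^sup>2) * (real k * (real k - 1))"
proof -
  define m where "m = n - k + 1"
  have mn: "m \<le> n" "m + (k - 1) = n" using k unfolding m_def by auto
  have gn: "gN N n = Sfun n" using n unfolding gN_def by simp
  have e1: "real n * dd n \<ge> 0" using dd_nonneg by simp
  have kk: "0 \<le> real k * (real k - 1)" using k by simp
  have c0: "0 \<le> 30 * dd n / real n" "0 \<le> 4 * Sfun 0 / (real n)\<^sup>2" using dd_nonneg Sfun_nonneg by auto
  show ?thesis
  proof (cases "2 * (k - 1) \<le> n")
    case True
    have sm: "gN N m - gN N n \<le> (\<Sum>j\<in>{m..<n}. dd j)"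
    proof -
      have mx: "max m N \<le> n" using mn n by auto
      have "gN N m - gN N n = (\<Sum>j\<in>{max m N..<n}. dd j)" unfolding gN_def using Sdiff[OF mx] gn gN_def by simp
      also have "\<dots> \<le> (\<Sum>j\<in>{m..<n}. dd j)" by (rule sum_mono2) (auto simp: dd_nonneg)
      finally show ?thesis .
    qed
    have "(\<Sum>j\<in>{m..<n}. dd j) \<le> (\<Sum>j\<in>{m..<n}. dd n * (1 + 30 * (real k - 1) / real n))"
    proof (intro sum_mono)
      fix j assume j: "j \<in> {m..<n}"
      have j27: "27 \<le> j" using j True mn n by auto
      have "dd j \<le> dd n * (1 + 30 * (real n - real j) / real n)" using D2[of j n] j27 j True mn by auto
      also have "\<dots> \<le> dd n * (1 + 30 * (real k - 1) / real n)"
        using j mn dd_nonneg[of n] n by (intro mult_left_mono) (auto simp: divide_right_mono)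
      finally show "dd j \<le> dd n * (1 + 30 * (real k - 1) / real n)" .
    qed
    also have "\<dots> = real (n - m) * (dd n * (1 + 30 * (real k - 1) / real n))"
      by simp
    also have "real (n - m) = real k - 1" using mn k by (simp add: of_nat_diff)
    also have "(real k - 1) * (dd n * (1 + 30 * (real k - 1) / real n)) = (real k - 1) * dd n * (1 + 30 * (real k - 1) / real n)"
      by simp
    also have "\<dots> = (real k - 1) * dd n + 30 * dd n / real n * ((real k - 1) * (real k - 1))"
      by (simp add: field_simps)
    also have "\<dots> \<le> (real k - 1) * dd n + 30 * dd n / real n * (real k * (real k - 1))"
      using k c0 by (intro add_left_mono mult_left_mono mult_right_mono) auto
    also have "\<dots> \<le> (real k - 1) * dd n + (30 * dd n / real n + 4 * Sfun 0 / (real n)\<^sup>2) * (real k * (real k - 1))"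
      using c0 kk mult_nonneg_nonneg[OF c0(2) kk] by (simp add: distrib_right)
    finally show ?thesis using sm unfolding m_def by linarith
  next
    case False
    have "(real n)\<^sup>2 \<le> 4 * (real k * (real k - 1))"
    proof -
      have "n \<le> 2 * (k - 1)" using False by linarith
      then have "real n \<le> real (2 * (k - 1))" by (simp only: of_nat_le_iff)
      then have "real n \<le> 2 * (real k - 1)" using k by (simp add: of_nat_diff)
      then have "(real n)\<^sup>2 \<le> (2 * (real k - 1))\<^sup>2" by (intro power_mono) auto
      also have "\<dots> \<le> 4 * (real k * (real k - 1))" using k by (simp add: power2_eq_square field_simps)
      finally show ?thesis .
    qed
    then have "1 \<le> 4 * (real k * (real k - 1)) / (real n)\<^sup>2" using n by simp
    then have "Sfun 0 * 1 \<le> Sfun 0 * (4 * (real k * (real k - 1)) / (real n)\<^sup>2)"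
      using Sfun_nonneg by (intro mult_left_mono) auto
    then have a: "Sfun 0 \<le> 4 * Sfun 0 / (real n)\<^sup>2 * (real k * (real k - 1))" by (simp add: mult_ac)
    have "gN N (n - k + 1) - gN N n \<le> Sfun 0" using gN_bd by (metis abs_le_D1)
    also have "\<dots> \<le> (real k - 1) * dd n + (30 * dd n / real n + 4 * Sfun 0 / (real n)\<^sup>2) * (real k * (real k - 1))"
      using a k dd_nonneg[of n] c0 kk by (simp add: distrib_right add_increasing mult_nonneg_nonneg)
    finally show ?thesis .
  qed
qed


lemma mu_C1:
  fixes mu :: "nat \<Rightarrow> real" and b \<alpha> :: real
  assumes b: "b > 0" and a1: "\<alpha> \<le> 1" and a0: "0 < \<alpha>"
    and equiv: "(\<lambda>n. mu n) \<sim>[at_top] (\<lambda>n. b * ln (real n) powr \<alpha> / (real n)\<^sup>2)"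
  shows "\<exists>K\<ge>3. \<forall>k\<ge>K. 0 < mu k \<and> (real k)\<^sup>2 * mu k \<le> 2 * b * ln (real k)"
proof -
  define g where "g n = b * ln (real n) powr \<alpha> / (real n)\<^sup>2" for n :: nat
  have gpos: "0 < g n" if "3 \<le> n" for n
  proof -
    have "0 < ln (real n)" using that by (intro ln_gt_zero) auto
    then show ?thesis unfolding g_def using b that by auto
  qed
  have "((\<lambda>x. if mu x = 0 \<and> g x = 0 then 1 else mu x / g x) \<longlongrightarrow> 1) at_top"
    using asymp_equivD[OF equiv] unfolding g_def .
  then have "eventually (\<lambda>x. dist (if mu x = 0 \<and> g x = 0 then 1 else mu x / g x) 1 < 1/2) at_top"
    by (rule tendstoD) simp
  then obtain K0 where K0: "\<And>x. x \<ge> K0 \<Longrightarrow> dist (if mu x = 0 \<and> g x = 0 then 1 else mu x / g x) 1 < 1/2"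
    by (auto simp: eventually_at_top_linorder)
  define K where "K = max K0 3"
  have "\<forall>k\<ge>K. 0 < mu k \<and> (real k)\<^sup>2 * mu k \<le> 2 * b * ln (real k)"
  proof (intro allI impI)
    fix k assume k: "K \<le> k"
    have k3: "3 \<le> k" and kK0: "K0 \<le> k" using k unfolding K_def by auto
    have gp: "0 < g k" using gpos k3 .
    have "dist (mu k / g k) 1 < 1/2" using K0[OF kK0] gp by auto
    then have "\<bar>mu k / g k - 1\<bar> < 1/2" by (simp add: dist_real_def)
    then have r: "1/2 < mu k / g k" "mu k / g k < 3/2" by linarith+
    have "0 < mu k" using r(1) gp by (simp add: field_simps)
    moreover have "mu k \<le> 2 * g k" using r(2) gp by (simp add: field_simps)
    moreover have "ln (real k) powr \<alpha> \<le> ln (real k)"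
    proof -
      have l1: "1 \<le> ln (real k)"
      proof -
        have "exp 1 \<le> (3::real)" by (rule exp_le)
        also have "\<dots> \<le> real k" using k3 by simp
        finally have "ln (exp 1) \<le> ln (real k)" using k3 by (subst ln_le_cancel_iff) auto
        then show ?thesis by simp
      qed
      have "ln (real k) powr \<alpha> \<le> ln (real k) powr 1" using l1 a1 by (intro powr_mono) auto
      then show ?thesis using l1 by simp
    qed
    ultimately have h0: "0 < mu k" and h1: "(real k)\<^sup>2 * mu k \<le> 2 * b * ln (real k) powr \<alpha>"
      and h2: "2 * b * ln (real k) powr \<alpha> \<le> 2 * b * ln (real k)"
      using k3 b unfolding g_def by (auto simp: field_simps)
    show "0 < mu k \<and> (real k)\<^sup>2 * mu k \<le> 2 * b * ln (real k)" using h0 h1 h2 by linarith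
  qed
  then show ?thesis unfolding K_def by (intro exI[of _ "max K0 3"]) auto
qed


lemma moment_bound:
  fixes mu :: "nat \<Rightarrow> real" and b :: real
  assumes K: "\<forall>k\<ge>K. (real k)\<^sup>2 * mu k \<le> 2 * b * ln (real k)" and b: "0 \<le> b" and n: "1 \<le> n"
  shows "(\<Sum>k=1..n. (real k)\<^sup>2 * mu k) \<le> (\<Sum>k<K. (real k)\<^sup>2 * \<bar>mu k\<bar>) + 2 * b * real n * ln (real n)"
proof -
  have ln0: "0 \<le> ln (real n)" using n by simp
  have t: "(real k)\<^sup>2 * mu k \<le> (if k \<in> {..<K} then (real k)\<^sup>2 * \<bar>mu k\<bar> else 0) + 2 * b * ln (real n)"
    if k: "k \<in> {1..n}" for k
  proof (cases "k < K")
    case True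
    have "(real k)\<^sup>2 * mu k \<le> (real k)\<^sup>2 * \<bar>mu k\<bar>" by (intro mult_left_mono) auto
    moreover have "0 \<le> 2 * b * ln (real n)" using b ln0 by simp
    ultimately show ?thesis using True by simp
  next
    case False
    have "(real k)\<^sup>2 * mu k \<le> 2 * b * ln (real k)" using K False by auto
    also have "\<dots> \<le> 2 * b * ln (real n)" using k b by (intro mult_left_mono) auto
    finally show ?thesis using False by simp
  qed
  have "(\<Sum>k=1..n. (real k)\<^sup>2 * mu k) \<le> (\<Sum>k=1..n. (if k \<in> {..<K} then (real k)\<^sup>2 * \<bar>mu k\<bar> else 0) + 2 * b * ln (real n))"
    by (intro sum_mono t)
  also have "\<dots> = (\<Sum>k\<in>{1..n} \<inter> {..<K}. (real k)\<^sup>2 * \<bar>mu k\<bar>) + real n * (2 * b * ln (real n))"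
    by (simp add: sum.distrib sum.inter_restrict)
  also have "(\<Sum>k\<in>{1..n} \<inter> {..<K}. (real k)\<^sup>2 * \<bar>mu k\<bar>) \<le> (\<Sum>k<K. (real k)\<^sup>2 * \<bar>mu k\<bar>)"
    by (rule sum_mono2) auto
  finally show ?thesis by (simp add: mult_ac)
qed

lemma suminf_le_term:
  fixes f :: "nat \<Rightarrow> real"
  assumes sf: "summable f" and np: "\<And>i. f i \<le> 0"
  shows "suminf f \<le> f j"
proof -
  have "suminf f \<le> (\<Sum>i. if i = j then f j else 0)"
    by (rule suminf_le) (use sf np in \<open>auto intro: summable_finite[of "{j}"]\<close>)
  also have "\<dots> = f j" by (subst suminf_finite[of "{j}"]) auto
  finally show ?thesis .
qed

lemma Lsum_bound:
  fixes lam :: "real \<Rightarrow> real" and mu :: "nat \<Rightarrow> real"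
  assumes lam_meas: "lam \<in> borel_measurable lborel"
    and lam_nonneg: "\<And>x. x \<in> {0..1} \<Longrightarrow> 0 \<le> lam x"
    and lam_fin: "set_integrable lborel {0..1} lam"
    and mu_nonneg: "\<And>k. 1 \<le> k \<Longrightarrow> 0 \<le> mu k"
    and mu_fin: "summable (\<lambda>k. mu (Suc k))"
    and N: "27 \<le> N" and n: "N \<le> n" "54 \<le> n"
  shows "(\<Sum>m. N_rate lam mu n m * (gN N m - gN N n))
     \<le> - dd n * (Phi_mu mu n - Phi_Lambda lam n) + 4 * dd n * (\<Sum>k=1..n. (real k)\<^sup>2 * mu k)
       + (30 + 4 * Sfun 0) * set_lebesgue_integral lborel {0..1} lam"
proof -
  define LT where "LT = set_lebesgue_integral lborel {0..1} lam"
  have LT0: "0 \<le> LT" unfolding LT_def by (rule LT_nonneg) (rule lam_nonneg)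
  define c where "c = 30 * dd n / real n + 4 * Sfun 0 / (real n)\<^sup>2"
  have c0: "0 \<le> c" unfolding c_def using dd_nonneg Sfun_nonneg by auto
  have dec: "(\<Sum>m. N_rate lam mu n m * (gN N m - gN N n))
      = (\<Sum>k=2..n. Rk lam n k * (gN N (n - k + 1) - gN N n)) + (\<Sum>i. real n * mu (Suc i) * (gN N (n + Suc i) - gN N n))"
    by (rule Nrate_decomp(3)[OF mu_nonneg mu_fin, of "\<lambda>m. gN N m - gN N n" "Sfun 0"]) (use gN_bd n N in auto)
  have "(\<Sum>k=2..n. Rk lam n k * (gN N (n - k + 1) - gN N n))
      \<le> (\<Sum>k=2..n. Rk lam n k * ((real k - 1) * dd n + c * (real k * (real k - 1))))"
    unfolding c_def using n by (intro sum_mono mult_left_mono down_term Rk_nonneg lam_nonneg) auto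
  also have "\<dots> = dd n * Phi_Lambda lam n + c * (\<Sum>k=2..n. Rk lam n k * (real k * (real k - 1)))"
    unfolding Phi_Lambda_def Rk_def by (simp add: sum.distrib sum_distrib_left distrib_left mult_ac)
  also have "(\<Sum>k=2..n. Rk lam n k * (real k * (real k - 1))) = real n * (real n - 1) * LT"
    unfolding LT_def by (rule sum_Rk_kk[OF lam_meas lam_fin])
  also have "c * (real n * (real n - 1) * LT) \<le> (30 + 4 * Sfun 0) * LT"
  proof -
    have "c * (real n * (real n - 1)) \<le> c * (real n * real n)" using c0 n by (intro mult_left_mono) auto
    also have "\<dots> = 30 * (real n * dd n) + 4 * Sfun 0" unfolding c_def using n by (simp add: field_simps power2_eq_square)
    also have "\<dots> \<le> 30 * 1 + 4 * Sfun 0" using n_dd_le1[of n] n by simp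
    finally have "c * (real n * (real n - 1)) \<le> 30 + 4 * Sfun 0" by simp
    then have "c * (real n * (real n - 1)) * LT \<le> (30 + 4 * Sfun 0) * LT" using LT0 by (rule mult_right_mono)
    then show ?thesis by (simp add: mult_ac)
  qed
  finally have down: "(\<Sum>k=2..n. Rk lam n k * (gN N (n - k + 1) - gN N n)) \<le> dd n * Phi_Lambda lam n + (30 + 4 * Sfun 0) * LT"
    by simp
  have up: "(\<Sum>i. real n * mu (Suc i) * (gN N (n + Suc i) - gN N n))
         \<le> - dd n * Phi_mu mu n + 4 * dd n * (\<Sum>k=1..n. (real k)\<^sup>2 * mu k)"
    by (rule up_bound[OF mu_nonneg mu_fin N n(1)])
  show ?thesis unfolding dec LT_def[symmetric] using down up by (simp add: algebra_simps)
qed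


lemma nlndd: "27 \<le> n \<Longrightarrow> real n * ln (real n) * dd n \<le> 1"
proof -
  assume n: "27 \<le> n"
  have l: "1 \<le> ln (real n)" "1 \<le> ln (ln (real n))" using lnln_ge1[of "real n"] n by auto
  then have h: "1 \<le> (ln (ln (real n)))\<^sup>2" by (simp add: one_le_power)
  have "real n * ln (real n) * dd n = 1 / (ln (ln (real n)))\<^sup>2"
    using n l h unfolding dd_def AF_def by (simp add: field_simps)
  also have "\<dots> \<le> 1" using h by (auto simp: divide_le_eq_1)
  finally show ?thesis .
qed

lemma neg_div_aux: "- (1 / (X::real)) * (a - c) = (c - a) / X"
  by (cases "X = 0") (simp_all add: field_simps)

lemma analytic_main:
  fixes lam :: "real \<Rightarrow> real" and mu :: "nat \<Rightarrow> real" and b \<alpha> :: real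
  assumes lam_meas: "lam \<in> borel_measurable lborel"
    and lam_nonneg: "\<And>x. x \<in> {0..1} \<Longrightarrow> 0 \<le> lam x"
    and lam_fin: "set_integrable lborel {0..1} lam"
    and mu_nonneg: "\<And>k. 1 \<le> k \<Longrightarrow> 0 \<le> mu k"
    and mu_fin: "summable (\<lambda>k. mu (Suc k))"
    and C1: "b > 0" "0 < \<alpha>" "\<alpha> \<le> 1"
      "(\<lambda>n. mu n) \<sim>[at_top] (\<lambda>n. b * ln (real n) powr \<alpha> / (real n)\<^sup>2)"
    and lim: "limsup (\<lambda>n. ereal ((Phi_Lambda lam n - Phi_mu mu n) /
                 (real n * ln (real n) * (ln (ln (real n)))\<^sup>2))) = -\<infinity>"
  shows "\<exists>g \<epsilon> G. 0 < \<epsilon> \<and> (\<forall>n. 0 \<le> g n \<and> g n \<le> G) \<and> (\<forall>n. 1 \<le> n \<longrightarrow> (\<Sum>m. N_rate lam mu n m * (g m - g n)) \<le> - \<epsilon>)"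
proof -
  obtain K where K3: "K \<ge> 3" and K: "\<forall>k\<ge>K. 0 < mu k \<and> (real k)\<^sup>2 * mu k \<le> 2 * b * ln (real k)"
    using mu_C1[OF C1(1) C1(3) C1(2) C1(4)] by blast
  define K1 where "K1 = (\<Sum>k<K. (real k)\<^sup>2 * \<bar>mu k\<bar>)"
  have K10: "0 \<le> K1" unfolding K1_def by (intro sum_nonneg) auto
  define LT where "LT = set_lebesgue_integral lborel {0..1} lam"
  define B where "B = 4 * K1 + 8 * b + (30 + 4 * Sfun 0) * LT"
  define F where "F n = (Phi_Lambda lam n - Phi_mu mu n) / (real n * ln (real n) * (ln (ln (real n)))\<^sup>2)" for n
  have "ereal (- (B + 1)) > limsup (\<lambda>n. ereal (F n))" using lim unfolding F_def by simp
  then have "eventually (\<lambda>n. ereal (F n) < ereal (- (B + 1))) sequentially" by (rule Limsup_lessD)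
  then obtain N1 where N1: "\<And>n. n \<ge> N1 \<Longrightarrow> F n < - (B + 1)"
    by (auto simp: eventually_sequentially)
  define N where "N = max (max N1 K) 54"
  have N27: "27 \<le> N" and NN1: "N1 \<le> N" and NK: "K \<le> N" unfolding N_def by auto
  define \<epsilon> where "\<epsilon> = min 1 (mu (Suc N) * dd N)"
  have muN: "0 < mu (Suc N)" using K NK by auto
  have eps: "0 < \<epsilon>" unfolding \<epsilon>_def using muN dd_pos[OF N27] by auto
  have main: "(\<Sum>m. N_rate lam mu n m * (gN N m - gN N n)) \<le> - \<epsilon>" if n1: "1 \<le> n" for n
  proof (cases "N \<le> n")
    case True
    have n54: "54 \<le> n" using True unfolding N_def by auto
    have n27: "27 \<le> n" using n54 by simp
    have L: "(\<Sum>m. N_rate lam mu n m * (gN N m - gN N n))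
       \<le> - dd n * (Phi_mu mu n - Phi_Lambda lam n) + 4 * dd n * (\<Sum>k=1..n. (real k)\<^sup>2 * mu k) + (30 + 4 * Sfun 0) * LT"
      unfolding LT_def by (rule Lsum_bound[OF lam_meas lam_nonneg lam_fin mu_nonneg mu_fin N27 True n54])
    have mom: "(\<Sum>k=1..n. (real k)\<^sup>2 * mu k) \<le> K1 + 2 * b * real n * ln (real n)"
      unfolding K1_def by (rule moment_bound) (use K C1(1) n1 in auto)
    have "4 * dd n * (\<Sum>k=1..n. (real k)\<^sup>2 * mu k) \<le> 4 * dd n * (K1 + 2 * b * real n * ln (real n))"
      using mom dd_nonneg[of n] by (intro mult_left_mono) auto
    also have "\<dots> = 4 * (dd n * K1) + 8 * b * (real n * ln (real n) * dd n)" by (simp add: algebra_simps)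
    also have "\<dots> \<le> 4 * (1 * K1) + 8 * b * 1"
      using dd_le1[OF n27] K10 nlndd[OF n27] C1(1)
      by (intro add_mono mult_left_mono mult_right_mono) auto
    finally have m2: "4 * dd n * (\<Sum>k=1..n. (real k)\<^sup>2 * mu k) \<le> 4 * K1 + 8 * b" by simp
    have Fn: "- dd n * (Phi_mu mu n - Phi_Lambda lam n) = F n"
      unfolding F_def dd_def AF_def by (rule neg_div_aux)
    have "F n < - (B + 1)" using N1 NN1 True by auto
    then have "(\<Sum>m. N_rate lam mu n m * (gN N m - gN N n)) \<le> -1"
      using L m2 Fn unfolding B_def by linarith
    then show ?thesis unfolding \<epsilon>_def by linarith
  next
    case False
    then have nN: "n < N" by simp
    have dec: "(\<Sum>m. N_rate lam mu n m * (gN N m - gN N n))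
      = (\<Sum>k=2..n. Rk lam n k * (gN N (n - k + 1) - gN N n)) + (\<Sum>i. real n * mu (Suc i) * (gN N (n + Suc i) - gN N n))"
      by (rule Nrate_decomp(3)[OF mu_nonneg mu_fin, of "\<lambda>m. gN N m - gN N n" "Sfun 0"]) (use gN_bd n1 in auto)
    have z0: "(\<Sum>k=2..n. Rk lam n k * (gN N (n - k + 1) - gN N n)) = 0"
      using nN by (intro sum.neutral) (auto simp: gN_def max_def)
    have sf: "summable (\<lambda>i. real n * mu (Suc i) * (gN N (n + Suc i) - gN N n))"
      by (rule Nrate_decomp(1)[OF mu_nonneg mu_fin, of "\<lambda>m. gN N m - gN N n" "Sfun 0"]) (use gN_bd n1 in auto)
    have np: "real n * mu (Suc i) * (gN N (n + Suc i) - gN N n) \<le> 0" for i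
    proof -
      have "gN N (n + Suc i) \<le> gN N n" unfolding gN_def by (intro Sfun_antimono) auto
      then show ?thesis using mu_nonneg[of "Suc i"] by (simp add: mult_nonneg_nonpos)
    qed
    have "(\<Sum>i. real n * mu (Suc i) * (gN N (n + Suc i) - gN N n)) \<le> real n * mu (Suc N) * (gN N (n + Suc N) - gN N n)"
      by (rule suminf_le_term[OF sf np])
    also have "\<dots> \<le> real n * mu (Suc N) * (- dd N)"
    proof -
      have "gN N (n + Suc N) = Sfun (n + Suc N)" "gN N n = Sfun N" using nN unfolding gN_def by auto
      moreover have "Sfun (n + Suc N) + dd N \<le> Sfun N" by (rule Sfun_drop) simp
      ultimately show ?thesis using muN n1 by (intro mult_left_mono) auto
    qed
    also have "\<dots> \<le> 1 * mu (Suc N) * (- dd N)"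
      using n1 muN dd_pos[OF N27] by (intro mult_right_mono_neg mult_right_mono) auto
    also have "\<dots> \<le> - \<epsilon>" unfolding \<epsilon>_def by simp
    finally show ?thesis using dec z0 by linarith
  qed
  show ?thesis
    by (rule exI[of _ "gN N"], rule exI[of _ \<epsilon>], rule exI[of _ "Sfun 0"]) (use eps main gN_nonneg gN_le in auto)
qed


definition Fexp :: "real \<Rightarrow> real" where "Fexp s = (if s \<le> 0 then 0 else 1 - exp (- s))"

lemma Fexp_lim: "(\<lambda>T::nat. Fexp (real T)) \<longlonglongrightarrow> 1"
proof -
  have "(\<lambda>T::nat. 1 - exp (- real T)) \<longlonglongrightarrow> 1 - 0"
    by (intro tendsto_intros filterlim_compose[OF exp_at_bot] filterlim_compose[OF filterlim_uminus_at_bot_at_top] filterlim_real_sequentially)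
  then have "(\<lambda>T::nat. 1 - exp (- real T)) \<longlonglongrightarrow> 1" by simp
  moreover have "eventually (\<lambda>T::nat. Fexp (real T) = 1 - exp (- real T)) sequentially"
    using eventually_gt_at_top[of "0::nat"] by eventually_elim (auto simp: Fexp_def)
  ultimately show ?thesis using Lim_transform_eventually eventually_mono by (metis (mono_tags, lifting))
qed

lemma Eint_gen:
  fixes E :: "'a \<Rightarrow> real"
  assumes ps: "prob_space M" and Em[measurable]: "E \<in> borel_measurable M" and A[measurable]: "A \<in> sets M"
    and h: "\<And>a. emeasure M (A \<inter> {x \<in> space M. E x \<le> a}) = emeasure M A * ennreal (Fexp a)"
  shows "(\<integral>\<^sup>+x. ennreal (E x) * indicator A x \<partial>M) = emeasure M A"
proof -
  interpret prob_space M by (rule ps)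
  show ?thesis
  proof (cases "emeasure M A = 0")
    case True
    then have "AE x in M. x \<notin> A" using A by (intro AE_not_in) (simp add: null_sets_def)
    then have "AE x in M. ennreal (E x) * indicator A x = 0"
      by eventually_elim simp
    then have "(\<integral>\<^sup>+x. ennreal (E x) * indicator A x \<partial>M) = (\<integral>\<^sup>+x. 0 \<partial>M)"
      by (rule nn_integral_cong_AE)
    then show ?thesis using True by simp
  next
    case False
    have fin: "emeasure M A \<noteq> \<top>" by (rule emeasure_finite)
    define M' where "M' = uniform_measure M A"
    have Em'[measurable]: "E \<in> borel_measurable M'"
      unfolding M'_def by measurable
    have "distributed M' lborel E (erlang_density 0 1)"
    proof (rule erlang_distributedI)
      fix a :: real assume a: "0 \<le> a"
      have "emeasure M' {x \<in> space M'. E x \<le> a} = emeasure M (A \<inter> {x \<in> space M. E x \<le> a}) / emeasure M A"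
        unfolding M'_def by (subst emeasure_uniform_measure) auto
      also have "\<dots> = emeasure M A * ennreal (Fexp a) / emeasure M A"
        by (simp only: h)
      also have "\<dots> = ennreal (Fexp a)"
        using False fin by (subst mult.commute) (rule ennreal_mult_divide_eq)
      also have "Fexp a = erlang_CDF 0 1 a"
        using a by (auto simp: Fexp_def erlang_CDF_0)
      finally show "emeasure M' {x \<in> space M'. E x \<le> a} = ennreal (erlang_CDF 0 1 a)" .
    qed (rule Em', simp)
    then have "(\<integral>\<^sup>+x. ennreal (erlang_density 0 1 x) * ennreal x \<partial>lborel) = (\<integral>\<^sup>+x. ennreal (E x) \<partial>M')"
      by (rule distributed_nn_integral) measurable
    also have "(\<integral>\<^sup>+x. ennreal (erlang_density 0 1 x) * ennreal x \<partial>lborel) = (\<integral>\<^sup>+x. ennreal (erlang_density 0 1 x * x ^ 1) \<partial>lborel)"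
      by (intro nn_integral_cong) (simp add: ennreal_mult')
    also have "\<dots> = 1"
      by (subst nn_integral_erlang_ith_moment) auto
    finally have "(\<integral>\<^sup>+x. ennreal (E x) \<partial>M') = 1" ..
    moreover have "(\<integral>\<^sup>+x. ennreal (E x) \<partial>M') = (\<integral>\<^sup>+x. ennreal (E x) * indicator A x \<partial>M) / emeasure M A"
      unfolding M'_def by (rule nn_integral_uniform_measure) measurable
    ultimately show ?thesis by (simp add: divide_eq_1_ennreal)
  qed
qed

lemma ennreal_suminf_swap: "(\<Sum>i. \<Sum>j. f i j) = (\<Sum>j. \<Sum>i. (f i j :: ennreal))"
proof -
  have "(\<Sum>i. \<Sum>j. f i j) = (\<Sum>i. \<integral>\<^sup>+j. f i j \<partial>count_space UNIV)"
    by (simp add: nn_integral_count_space_nat)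
  also have "\<dots> = (\<integral>\<^sup>+j. (\<Sum>i. f i j) \<partial>count_space UNIV)"
    by (rule nn_integral_suminf[symmetric]) simp
  also have "\<dots> = (\<Sum>j. \<Sum>i. f i j)"
    by (simp add: nn_integral_count_space_nat)
  finally show ?thesis .
qed

context
  fixes r :: "nat \<Rightarrow> nat \<Rightarrow> real" and n0 :: nat and M :: "'a measure"
    and Y :: "nat \<Rightarrow> 'a \<Rightarrow> nat" and E :: "nat \<Rightarrow> 'a \<Rightarrow> real"
  assumes jhp: "jump_hold_process r n0 M Y E"
    and rnn: "\<And>a b. 0 \<le> r a b" and qnn: "\<And>a. 0 \<le> total_rate r a"
begin

definition PP :: "nat \<Rightarrow> (nat \<Rightarrow> nat) \<Rightarrow> real" where
  "PP k y = (if y 0 = n0 then 1 else 0) * (\<Prod>i<k. r (y i) (y (Suc i)) / total_rate r (y i))"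

lemma ps: "prob_space M" using jhp unfolding jump_hold_process_def by blast

lemma Ymeas[measurable]: "Y k \<in> measurable M (count_space UNIV)"
  using jhp unfolding jump_hold_process_def by blast

lemma Emeas[measurable]: "E k \<in> borel_measurable M"
  using jhp unfolding jump_hold_process_def by blast

lemma fdd: "measure M {x \<in> space M. \<forall>i\<le>k. Y i x = y i \<and> E i x \<le> t i} = PP k y * (\<Prod>i\<le>k. Fexp (t i))"
  using jhp unfolding jump_hold_process_def PP_def Fexp_def by auto

lemma measure_lim:
  assumes "incseq S" "\<And>T. S T \<in> sets M" "(\<Union>T. S T) = X" "(\<lambda>T. measure M (S T)) \<longlonglongrightarrow> c"
  shows "measure M X = c"
proof -
  interpret prob_space M by (rule ps)
  have "(\<lambda>T. measure M (S T)) \<longlonglongrightarrow> measure M (\<Union>T. S T)"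
    by (rule Lim_measure_incseq) (use assms in auto)
  with assms(3,4) show ?thesis using LIMSEQ_unique by blast
qed

lemma L1: "measure M {x \<in> space M. (\<forall>i\<le>k. Y i x = y i) \<and> E k x \<le> s} = PP k y * Fexp s"
proof (rule measure_lim)
  define S where "S T = {x \<in> space M. \<forall>i\<le>k. Y i x = y i \<and> E i x \<le> (if i = k then s else real T)}" for T :: nat
  show "incseq S" unfolding S_def incseq_def
    by (auto simp: split: if_splits)
  show "S T \<in> sets M" for T unfolding S_def by measurable
  show "(\<Union>T. S T) = {x \<in> space M. (\<forall>i\<le>k. Y i x = y i) \<and> E k x \<le> s}"
  proof (intro equalityI subsetI)
    fix x assume x: "x \<in> {x \<in> space M. (\<forall>i\<le>k. Y i x = y i) \<and> E k x \<le> s}"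
    define T where "T = nat \<lceil>\<Sum>i\<le>k. \<bar>E i x\<bar>\<rceil>"
    have "E i x \<le> real T" if "i \<le> k" for i
    proof -
      have "E i x \<le> \<bar>E i x\<bar>" by simp
      also have "\<dots> \<le> (\<Sum>i\<le>k. \<bar>E i x\<bar>)" using that by (intro member_le_sum) auto
      also have "\<dots> \<le> real T" unfolding T_def by linarith
      finally show ?thesis .
    qed
    then have "x \<in> S T" using x unfolding S_def by auto
    then show "x \<in> (\<Union>T. S T)" by blast
  qed (auto simp: S_def)
  have "measure M (S T) = PP k y * Fexp s * Fexp (real T) ^ k" for T
  proof -
    have "measure M (S T) = PP k y * (\<Prod>i\<le>k. Fexp (if i = k then s else real T))"
      unfolding S_def by (rule fdd)
    also have "(\<Prod>i\<le>k. Fexp (if i = k then s else real T)) = Fexp s * (\<Prod>i<k. Fexp (real T))"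
      by (simp add: lessThan_Suc_atMost[symmetric] prod.lessThan_Suc)
    finally show ?thesis by simp
  qed
  moreover have "(\<lambda>T. PP k y * Fexp s * Fexp (real T) ^ k) \<longlonglongrightarrow> PP k y * Fexp s * 1 ^ k"
    by (intro tendsto_intros Fexp_lim)
  ultimately show "(\<lambda>T. measure M (S T)) \<longlonglongrightarrow> PP k y * Fexp s" by simp
qed

lemma L2: "measure M {x \<in> space M. \<forall>i\<le>k. Y i x = y i} = PP k y"
proof (rule measure_lim)
  define S where "S T = {x \<in> space M. (\<forall>i\<le>k. Y i x = y i) \<and> E k x \<le> real T}" for T :: nat
  show "incseq S" unfolding S_def incseq_def
    by auto
  show "S T \<in> sets M" for T unfolding S_def by measurable
  show "(\<Union>T. S T) = {x \<in> space M. \<forall>i\<le>k. Y i x = y i}"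
    unfolding S_def by (auto intro: real_nat_ceiling_ge)
  have "(\<lambda>T. PP k y * Fexp (real T)) \<longlonglongrightarrow> PP k y * 1"
    by (intro tendsto_intros Fexp_lim)
  then show "(\<lambda>T. measure M (S T)) \<longlonglongrightarrow> PP k y" unfolding S_def L1 by simp
qed

definition AA :: "nat \<Rightarrow> nat list \<Rightarrow> 'a set" where
  "AA k ys = {x \<in> space M. \<forall>i\<le>k. Y i x = ys ! i}"

lemma AA_sets[measurable]: "AA k ys \<in> sets M"
  unfolding AA_def by measurable

lemma decomp:
  assumes X: "X \<in> sets M"
    and h: "\<And>ys. length ys = Suc k \<Longrightarrow> ys ! k = n \<Longrightarrow> emeasure M (AA k ys \<inter> X) = emeasure M (AA k ys) * c"
  shows "emeasure M ({x \<in> space M. Y k x = n} \<inter> X) = emeasure M {x \<in> space M. Y k x = n} * c"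
proof -
  define Paths where "Paths = {ys :: nat list. length ys = Suc k \<and> ys ! k = n}"
  have cnt: "countable Paths" by (rule countableI_type)
  have eq: "{x \<in> space M. Y k x = n} = (\<Union>ys\<in>Paths. AA k ys)"
  proof (intro equalityI subsetI)
    fix x assume x: "x \<in> {x \<in> space M. Y k x = n}"
    define ys where "ys = map (\<lambda>i. Y i x) [0..<Suc k]"
    have "ys \<in> Paths" "x \<in> AA k ys" using x unfolding ys_def Paths_def AA_def
      by (auto simp del: upt_Suc simp: nth_map_upt)
    then show "x \<in> (\<Union>ys\<in>Paths. AA k ys)" by blast
  qed (auto simp: Paths_def AA_def)
  have disj0: "AA k ys \<inter> AA k zs = {}" if "ys \<in> Paths" "zs \<in> Paths" "ys \<noteq> zs" for ys zs
  proof -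
    have "\<not> (\<forall>i<Suc k. ys ! i = zs ! i)"
    proof
      assume "\<forall>i<Suc k. ys ! i = zs ! i"
      then have "ys = zs" using that(1,2) unfolding Paths_def by (intro nth_equalityI) auto
      with that(3) show False by simp
    qed
    then obtain i where "i < Suc k" "ys ! i \<noteq> zs ! i" by blast
    then show ?thesis unfolding AA_def by auto
  qed
  have d1: "disjoint_family_on (AA k) Paths"
    using disj0 unfolding disjoint_family_on_def by blast
  have d2: "disjoint_family_on (\<lambda>ys. AA k ys \<inter> X) Paths"
    using disj0 unfolding disjoint_family_on_def by blast
  have eq2: "{x \<in> space M. Y k x = n} \<inter> X = (\<Union>ys\<in>Paths. AA k ys \<inter> X)"
    unfolding eq by blast
  have "emeasure M ({x \<in> space M. Y k x = n} \<inter> X) = (\<integral>\<^sup>+ys. emeasure M (AA k ys \<inter> X) \<partial>count_space Paths)"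
    unfolding eq2 by (rule emeasure_UN_countable) (use X cnt d2 in auto)
  also have "\<dots> = (\<integral>\<^sup>+ys. emeasure M (AA k ys) * c \<partial>count_space Paths)"
    by (intro nn_integral_cong) (auto simp: Paths_def h)
  also have "\<dots> = (\<integral>\<^sup>+ys. emeasure M (AA k ys) \<partial>count_space Paths) * c"
    by (rule nn_integral_multc) auto
  also have "(\<integral>\<^sup>+ys. emeasure M (AA k ys) \<partial>count_space Paths) = emeasure M {x \<in> space M. Y k x = n}"
    unfolding eq by (rule emeasure_UN_countable[symmetric]) (use cnt d1 in auto)
  finally show ?thesis .
qed

lemma AA_meas: "measure M (AA k ys) = PP k (\<lambda>i. ys ! i)"
  unfolding AA_def by (rule L2)

lemma PP_nonneg: "0 \<le> PP k y"
  by (subst L2[symmetric]) (rule measure_nonneg)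

lemma PP_append:
  assumes "length ys = Suc k"
  shows "PP (Suc k) (\<lambda>i. (ys @ [m]) ! i) = PP k (\<lambda>i. ys ! i) * (r (ys ! k) m / total_rate r (ys ! k))"
proof -
  have "(\<Prod>i<k. r ((ys @ [m]) ! i) ((ys @ [m]) ! Suc i) / total_rate r ((ys @ [m]) ! i))
      = (\<Prod>i<k. r (ys ! i) (ys ! Suc i) / total_rate r (ys ! i))"
    by (intro prod.cong) (use assms in \<open>auto simp: nth_append\<close>)
  moreover have "(ys @ [m]) ! 0 = ys ! 0" "(ys @ [m]) ! k = ys ! k" "(ys @ [m]) ! Suc k = m"
    using assms by (auto simp: nth_append)
  ultimately show ?thesis unfolding PP_def by (simp add: prod.lessThan_Suc)
qed

lemma trans_step:
  assumes cnn: "0 \<le> r n m / total_rate r n"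
  shows "emeasure M {x \<in> space M. Y k x = n \<and> Y (Suc k) x = m}
       = emeasure M {x \<in> space M. Y k x = n} * ennreal (r n m / total_rate r n)"
proof -
  interpret prob_space M by (rule ps)
  have "emeasure M ({x \<in> space M. Y k x = n} \<inter> {x \<in> space M. Y (Suc k) x = m})
       = emeasure M {x \<in> space M. Y k x = n} * ennreal (r n m / total_rate r n)"
  proof (rule decomp)
    fix ys :: "nat list" assume ys: "length ys = Suc k" "ys ! k = n"
    have "AA k ys \<inter> {x \<in> space M. Y (Suc k) x = m} = AA (Suc k) (ys @ [m])"
      using ys unfolding AA_def by (auto simp: nth_append le_Suc_eq)
    then have "emeasure M (AA k ys \<inter> {x \<in> space M. Y (Suc k) x = m})
        = ennreal (PP k (\<lambda>i. ys ! i) * (r n m / total_rate r n))"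
      using AA_meas[of "Suc k" "ys @ [m]"] PP_append[OF ys(1), of m] ys(2)
      by (simp add: emeasure_eq_measure)
    also have "\<dots> = emeasure M (AA k ys) * ennreal (r n m / total_rate r n)"
      by (simp only: emeasure_eq_measure AA_meas ennreal_mult'[OF PP_nonneg])
    finally show "emeasure M (AA k ys \<inter> {x \<in> space M. Y (Suc k) x = m}) = emeasure M (AA k ys) * ennreal (r n m / total_rate r n)" .
  qed measurable
  moreover have "{x \<in> space M. Y k x = n} \<inter> {x \<in> space M. Y (Suc k) x = m} = {x \<in> space M. Y k x = n \<and> Y (Suc k) x = m}"
    by blast
  ultimately show ?thesis by simp
qed

lemma Fexp_nonneg: "0 \<le> Fexp s"
  by (auto simp: Fexp_def)

lemma expo_step:
  shows "emeasure M {x \<in> space M. Y k x = n \<and> E k x \<le> s}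
       = emeasure M {x \<in> space M. Y k x = n} * ennreal (Fexp s)"
proof -
  interpret prob_space M by (rule ps)
  have "emeasure M ({x \<in> space M. Y k x = n} \<inter> {x \<in> space M. E k x \<le> s})
       = emeasure M {x \<in> space M. Y k x = n} * ennreal (Fexp s)"
  proof (rule decomp)
    fix ys :: "nat list" assume ys: "length ys = Suc k" "ys ! k = n"
    have "AA k ys \<inter> {x \<in> space M. E k x \<le> s} = {x \<in> space M. (\<forall>i\<le>k. Y i x = ys ! i) \<and> E k x \<le> s}"
      unfolding AA_def by auto
    then have "emeasure M (AA k ys \<inter> {x \<in> space M. E k x \<le> s}) = ennreal (PP k (\<lambda>i. ys ! i) * Fexp s)"
      using L1 by (simp add: emeasure_eq_measure)
    also have "\<dots> = emeasure M (AA k ys) * ennreal (Fexp s)"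
      using PP_nonneg by (simp add: ennreal_mult' emeasure_eq_measure AA_meas)
    finally show "emeasure M (AA k ys \<inter> {x \<in> space M. E k x \<le> s}) = emeasure M (AA k ys) * ennreal (Fexp s)" .
  qed measurable
  moreover have "{x \<in> space M. Y k x = n} \<inter> {x \<in> space M. E k x \<le> s} = {x \<in> space M. Y k x = n \<and> E k x \<le> s}"
    by blast
  ultimately show ?thesis by simp
qed

lemma cnn: "0 \<le> r n m / total_rate r n"
  using rnn qnn by simp

definition pk :: "nat \<Rightarrow> nat \<Rightarrow> ennreal" where
  "pk k n = emeasure M {x \<in> space M. Y k x = n}"

lemma pk_rec: "pk (Suc k) m = (\<Sum>n. pk k n * ennreal (r n m / total_rate r n))"
proof -
  have "(\<Sum>n. pk k n * ennreal (r n m / total_rate r n))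
      = (\<Sum>n. emeasure M {x \<in> space M. Y k x = n \<and> Y (Suc k) x = m})"
    unfolding pk_def by (simp add: trans_step[OF cnn])
  also have "\<dots> = emeasure M (\<Union>n. {x \<in> space M. Y k x = n \<and> Y (Suc k) x = m})"
    by (rule suminf_emeasure) (auto simp: disjoint_family_on_def)
  also have "(\<Union>n. {x \<in> space M. Y k x = n \<and> Y (Suc k) x = m}) = {x \<in> space M. Y (Suc k) x = m}"
    by blast
  finally show ?thesis unfolding pk_def by simp
qed

lemma pk_0: "pk 0 n = (if n = n0 then 1 else 0)"
proof -
  interpret prob_space M by (rule ps)
  have "measure M {x \<in> space M. \<forall>i\<le>0. Y i x = (\<lambda>_. n) i} = PP 0 (\<lambda>_. n)" by (rule L2)
  then show ?thesis unfolding pk_def PP_def by (simp add: emeasure_eq_measure)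
qed

lemma Eint: "(\<integral>\<^sup>+x. ennreal (E k x) * indicator {x \<in> space M. Y k x = n} x \<partial>M) = pk k n"
  unfolding pk_def
proof (rule Eint_gen[OF ps])
  show "{x \<in> space M. Y k x = n} \<in> sets M" by measurable
  fix a
  have "{x \<in> space M. Y k x = n} \<inter> {x \<in> space M. E k x \<le> a} = {x \<in> space M. Y k x = n \<and> E k x \<le> a}" by blast
  then show "emeasure M ({x \<in> space M. Y k x = n} \<inter> {x \<in> space M. E k x \<le> a}) = emeasure M {x \<in> space M. Y k x = n} * ennreal (Fexp a)"
    using expo_step by simp
qed measurable

lemma E_nonneg: "AE x in M. \<forall>k. 0 \<le> E k x"
proof -
  interpret prob_space M by (rule ps)
  have "AE x in M. 0 \<le> E k x" for k
  proof -
    have "emeasure M (\<Union>n. {x \<in> space M. Y k x = n \<and> E k x \<le> 0}) = 0"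
      by (rule emeasure_UN_eq_0) (auto simp: expo_step Fexp_def)
    moreover have "(\<Union>n. {x \<in> space M. Y k x = n \<and> E k x \<le> 0}) = {x \<in> space M. E k x \<le> 0}" by blast
    ultimately have "emeasure M {x \<in> space M. E k x \<le> 0} = 0" by simp
    then have "AE x in M. \<not> E k x \<le> 0" by (subst AE_iff_measurable[OF _ refl]) auto
    then show ?thesis by (auto elim!: eventually_mono)
  qed
  then show ?thesis by (subst AE_all_countable) auto
qed

lemma Hk: "(\<integral>\<^sup>+x. ennreal (E k x / total_rate r (Y k x)) \<partial>M) = (\<Sum>n. pk k n * ennreal (1 / total_rate r n))"
proof -
  have pt: "ennreal (E k x / total_rate r (Y k x)) = (\<Sum>n. ennreal (E k x) * indicator {x \<in> space M. Y k x = n} x * ennreal (1 / total_rate r n))"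
    if x: "x \<in> space M" for x
  proof -
    have "(\<Sum>n. ennreal (E k x) * indicator {x \<in> space M. Y k x = n} x * ennreal (1 / total_rate r n))
        = (\<Sum>n\<in>{Y k x}. ennreal (E k x) * indicator {x \<in> space M. Y k x = n} x * ennreal (1 / total_rate r n))"
      by (rule suminf_finite) (auto simp: indicator_def)
    also have "\<dots> = ennreal (E k x) * ennreal (1 / total_rate r (Y k x))" using x by simp
    also have "\<dots> = ennreal (E k x / total_rate r (Y k x))"
    proof (cases "0 \<le> E k x")
      case True then show ?thesis by (simp add: ennreal_mult'[symmetric])
    next
      case False
      then have "E k x / total_rate r (Y k x) \<le> 0" using qnn[of "Y k x"]
        by (simp add: divide_nonpos_nonneg)
      then show ?thesis using False by (simp add: ennreal_neg)
    qed
    finally show ?thesis ..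
  qed
  have "(\<integral>\<^sup>+x. ennreal (E k x / total_rate r (Y k x)) \<partial>M)
      = (\<integral>\<^sup>+x. (\<Sum>n. ennreal (E k x) * indicator {x \<in> space M. Y k x = n} x * ennreal (1 / total_rate r n)) \<partial>M)"
    by (rule nn_integral_cong) (rule pt)
  also have "\<dots> = (\<Sum>n. \<integral>\<^sup>+x. ennreal (E k x) * indicator {x \<in> space M. Y k x = n} x * ennreal (1 / total_rate r n) \<partial>M)"
  proof (rule nn_integral_suminf)
    fix n
    have [measurable]: "{x \<in> space M. Y k x = n} \<in> sets M" by measurable
    show "(\<lambda>x. ennreal (E k x) * indicator {x \<in> space M. Y k x = n} x * ennreal (1 / total_rate r n)) \<in> borel_measurable M"
      by measurable
  qed
  also have "\<dots> = (\<Sum>n. pk k n * ennreal (1 / total_rate r n))"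
  proof (intro arg_cong[where f=suminf] ext)
    fix n
    have [measurable]: "{x \<in> space M. Y k x = n} \<in> sets M" by measurable
    have "(\<integral>\<^sup>+x. ennreal (E k x) * indicator {x \<in> space M. Y k x = n} x * ennreal (1 / total_rate r n) \<partial>M)
       = (\<integral>\<^sup>+x. ennreal (E k x) * indicator {x \<in> space M. Y k x = n} x \<partial>M) * ennreal (1 / total_rate r n)"
      by (rule nn_integral_multc) measurable
    then show "(\<integral>\<^sup>+x. ennreal (E k x) * indicator {x \<in> space M. Y k x = n} x * ennreal (1 / total_rate r n) \<partial>M)
       = pk k n * ennreal (1 / total_rate r n)" by (simp only: Eint)
  qed
  finally show ?thesis .
qed


lemma qY_meas[measurable]: "(\<lambda>x. total_rate r (Y j x)) \<in> borel_measurable M"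
  by (rule measurable_compose[OF Ymeas]) simp

lemma explosion_core:
  fixes g :: "nat \<Rightarrow> real" and \<epsilon> :: real
  assumes eps: "0 < \<epsilon>"
    and drift: "\<And>n. (\<Sum>m. ennreal (r n m / total_rate r n) * ennreal (g m)) + ennreal (\<epsilon> / total_rate r n) \<le> ennreal (g n)"
  shows "AE x in M. summable (\<lambda>k. E k x / total_rate r (Y k x))"
proof -
  interpret prob_space M by (rule ps)
  define G where "G k = (\<Sum>n. pk k n * ennreal (g n))" for k
  define H where "H k = (\<Sum>n. pk k n * ennreal (1 / total_rate r n))" for k
  have step: "G (Suc k) + ennreal \<epsilon> * H k \<le> G k" for k
  proof -
    have "G (Suc k) = (\<Sum>m. (\<Sum>n. pk k n * ennreal (r n m / total_rate r n)) * ennreal (g m))"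
      unfolding G_def pk_rec ..
    also have "\<dots> = (\<Sum>m. \<Sum>n. pk k n * (ennreal (r n m / total_rate r n) * ennreal (g m)))"
      by (simp only: ennreal_suminf_multc[symmetric] mult.assoc)
    also have "\<dots> = (\<Sum>n. \<Sum>m. pk k n * (ennreal (r n m / total_rate r n) * ennreal (g m)))"
      by (rule ennreal_suminf_swap)
    also have "\<dots> = (\<Sum>n. pk k n * (\<Sum>m. ennreal (r n m / total_rate r n) * ennreal (g m)))"
      by (simp only: ennreal_suminf_cmult)
    finally have 1: "G (Suc k) = (\<Sum>n. pk k n * (\<Sum>m. ennreal (r n m / total_rate r n) * ennreal (g m)))" .
    have "ennreal \<epsilon> * H k = (\<Sum>n. ennreal \<epsilon> * (pk k n * ennreal (1 / total_rate r n)))"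
      unfolding H_def by (simp only: ennreal_suminf_cmult)
    also have "\<dots> = (\<Sum>n. pk k n * ennreal (\<epsilon> / total_rate r n))"
    proof (intro arg_cong[where f=suminf] ext)
      fix n
      have "ennreal \<epsilon> * ennreal (1 / total_rate r n) = ennreal (\<epsilon> / total_rate r n)"
        using eps qnn[of n] by (subst ennreal_mult[symmetric]) auto
      then show "ennreal \<epsilon> * (pk k n * ennreal (1 / total_rate r n)) = pk k n * ennreal (\<epsilon> / total_rate r n)"
        by (metis mult.left_commute)
    qed
    finally have 2: "ennreal \<epsilon> * H k = (\<Sum>n. pk k n * ennreal (\<epsilon> / total_rate r n))" .
    have "G (Suc k) + ennreal \<epsilon> * H k
        = (\<Sum>n. pk k n * ((\<Sum>m. ennreal (r n m / total_rate r n) * ennreal (g m)) + ennreal (\<epsilon> / total_rate r n)))"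
      unfolding 1 2 distrib_left by (rule suminf_add[OF summableI summableI])
    also have "\<dots> \<le> (\<Sum>n. pk k n * ennreal (g n))"
      by (intro suminf_le summableI mult_left_mono drift) simp
    finally show ?thesis unfolding G_def .
  qed
  have G0: "G 0 = ennreal (g n0)"
  proof -
    have "G 0 = (\<Sum>n\<in>{n0}. pk 0 n * ennreal (g n))"
      unfolding G_def by (rule suminf_finite) (auto simp: pk_0)
    then show ?thesis by (simp add: pk_0)
  qed
  have ind: "G k + ennreal \<epsilon> * (\<Sum>j<k. H j) \<le> ennreal (g n0)" for k
  proof (induction k)
    case 0 then show ?case by (simp add: G0)
  next
    case (Suc k)
    have "G (Suc k) + ennreal \<epsilon> * (\<Sum>j<Suc k. H j) = (G (Suc k) + ennreal \<epsilon> * H k) + ennreal \<epsilon> * (\<Sum>j<k. H j)"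
      by (simp add: distrib_left add_ac)
    also have "\<dots> \<le> G k + ennreal \<epsilon> * (\<Sum>j<k. H j)"
      by (intro add_right_mono step)
    also have "\<dots> \<le> ennreal (g n0)" by (rule Suc.IH)
    finally show ?case .
  qed
  have "(\<Sum>j. ennreal \<epsilon> * H j) \<le> ennreal (g n0)"
    unfolding suminf_eq_SUP
  proof (rule SUP_least)
    fix k
    have "(\<Sum>j<k. ennreal \<epsilon> * H j) = ennreal \<epsilon> * (\<Sum>j<k. H j)" by (simp add: sum_distrib_left)
    also have "\<dots> \<le> G k + ennreal \<epsilon> * (\<Sum>j<k. H j)" by simp
    also have "\<dots> \<le> ennreal (g n0)" by (rule ind)
    finally show "(\<Sum>j<k. ennreal \<epsilon> * H j) \<le> ennreal (g n0)" .
  qed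
  then have le: "ennreal \<epsilon> * (\<Sum>j. H j) \<le> ennreal (g n0)" by simp
  have fin: "(\<Sum>j. H j) \<noteq> \<top>"
  proof
    assume "(\<Sum>j. H j) = \<top>"
    then have "ennreal \<epsilon> * (\<Sum>j. H j) = \<top>" using eps by (simp add: ennreal_mult_top)
    with le show False by (simp add: top_unique)
  qed
  have int: "(\<integral>\<^sup>+x. (\<Sum>j. ennreal (E j x / total_rate r (Y j x))) \<partial>M) = (\<Sum>j. H j)"
    unfolding H_def by (subst nn_integral_suminf) (measurable, simp add: Hk)
  have "AE x in M. (\<Sum>j. ennreal (E j x / total_rate r (Y j x))) \<noteq> \<infinity>"
    by (rule nn_integral_noteq_infinite) (measurable, simp add: int fin)
  with E_nonneg show ?thesis
  proof eventually_elim
    case (elim x)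
    have nt: "(\<Sum>j. ennreal (E j x / total_rate r (Y j x))) \<noteq> \<top>" using elim(2) by simp
    show ?case
      by (rule summable_suminf_not_top[OF _ nt]) (use elim(1) qnn in \<open>auto intro: divide_nonneg_nonneg\<close>)
  qed
qed

end


theorem theorem2p8:
  fixes lam_dens :: "real \<Rightarrow> real" and mu :: "nat \<Rightarrow> real"
    and b \<alpha> :: real
  assumes lam_meas: "lam_dens \<in> borel_measurable lborel"
    and lam_nonneg: "\<And>x. x \<in> {0..1} \<Longrightarrow> 0 \<le> lam_dens x"
    and lam_fin: "set_integrable lborel {0..1} lam_dens"
    and mu_nonneg: "\<And>k. 1 \<le> k \<Longrightarrow> 0 \<le> mu k"
    and mu_fin: "summable (\<lambda>k. mu (Suc k))"
    and C1: "b > 0" "0 < \<alpha>" "\<alpha> \<le> 1"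
      "(\<lambda>n. mu n) \<sim>[at_top] (\<lambda>n. b * ln (real n) powr \<alpha> / (real n)\<^sup>2)"
    and C2: "\<exists>\<beta> c1 c2. \<beta> > 1 \<and> c1 > 0 \<and> c2 > 0 \<and>
      (\<forall>x\<in>{0<..<1}. c1 * ln (1 / x) powr (\<beta> - 1) \<le> lam_dens x \<and>
                      lam_dens x \<le> c2 * ln (1 / x) powr (\<beta> - 1))"
    and lim: "limsup (\<lambda>n. ereal ((Phi_Lambda lam_dens n - Phi_mu mu n) /
                 (real n * ln (real n) * (ln (ln (real n)))\<^sup>2))) = -\<infinity>"
  shows "\<forall>n0\<ge>1. \<forall>(M::'a measure) Y E. jump_hold_process (N_rate lam_dens mu) n0 M Y E \<longrightarrow>
           (AE x in M. summable (\<lambda>k. E k x / total_rate (N_rate lam_dens mu) (Y k x)))"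
proof -
  obtain g \<epsilon> G where eps: "0 < \<epsilon>" and gb: "\<And>n. 0 \<le> g n \<and> g n \<le> G"
    and main: "\<And>n. 1 \<le> n \<Longrightarrow> (\<Sum>m. N_rate lam_dens mu n m * (g m - g n)) \<le> - \<epsilon>"
    using analytic_main[OF lam_meas lam_nonneg lam_fin mu_nonneg mu_fin C1 lim] by blast
  define r where "r = N_rate lam_dens mu"
  have rnn: "0 \<le> r a c" for a c unfolding r_def by (rule Nrate_nonneg[OF lam_nonneg mu_nonneg])
  have r0: "r 0 m = 0" for m unfolding r_def N_rate_def by simp
  have gbd: "\<bar>g m\<bar> \<le> G" for m using gb[of m] by auto
  have summ: "summable (r n)" for n
  proof (cases "n = 0")
    case True
    have "r 0 = (\<lambda>_. 0)" using r0 by auto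
    then show ?thesis using True by simp
  next
    case False
    have "summable (\<lambda>m. N_rate lam_dens mu n m * 1)"
      by (rule Nrate_decomp(2)[OF mu_nonneg mu_fin, of "\<lambda>_. 1" 1]) (use False in auto)
    then show ?thesis unfolding r_def by simp
  qed
  have qnn: "0 \<le> total_rate r a" for a unfolding total_rate_def by (intro suminf_nonneg summ rnn)
  have drift: "(\<Sum>m. ennreal (r n m / total_rate r n) * ennreal (g m)) + ennreal (\<epsilon> / total_rate r n) \<le> ennreal (g n)" for n
  proof (cases "n = 0")
    case True
    have "r 0 = (\<lambda>_. 0)" using r0 by auto
    then have "total_rate r n = 0" unfolding total_rate_def True by simp
    then show ?thesis by simp
  next
    case False
    then have n1: "1 \<le> n" by simp
    define q where "q = total_rate r n"
    have sg: "summable (\<lambda>m. r n m * g m)"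
      unfolding r_def by (rule Nrate_decomp(2)[OF mu_nonneg mu_fin, of g G]) (use gbd n1 in auto)
    have eq: "(\<Sum>m. r n m * (g m - g n)) = (\<Sum>m. r n m * g m) - q * g n"
    proof -
      have "(\<Sum>m. r n m * (g m - g n)) = (\<Sum>m. r n m * g m - r n m * g n)" by (simp add: algebra_simps)
      also have "\<dots> = (\<Sum>m. r n m * g m) - (\<Sum>m. r n m * g n)"
        by (rule suminf_diff[OF sg summable_mult2[OF summ], symmetric])
      also have "(\<Sum>m. r n m * g n) = q * g n" unfolding q_def total_rate_def by (rule suminf_mult2[OF summ, symmetric])
      finally show ?thesis .
    qed
    have key: "(\<Sum>m. r n m * g m) + \<epsilon> \<le> q * g n" using main[OF n1] eq unfolding r_def by simp
    have qpos: "0 < q"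
    proof (rule ccontr)
      assume "\<not> 0 < q"
      then have "q = 0" using qnn[of n] unfolding q_def by simp
      then have "\<forall>m. r n m = 0" using suminf_eq_zero_iff[OF summ rnn] unfolding q_def total_rate_def by simp
      then have "(\<Sum>m. r n m * (g m - g n)) = 0" by simp
      then show False using main[OF n1] eps unfolding r_def by simp
    qed
    have "(\<Sum>m. ennreal (r n m / q) * ennreal (g m)) = (\<Sum>m. ennreal (r n m * g m / q))"
    proof (intro arg_cong[where f=suminf] ext)
      fix m
      show "ennreal (r n m / q) * ennreal (g m) = ennreal (r n m * g m / q)"
        using rnn[of n m] qpos gb[of m] by (subst ennreal_mult[symmetric]) auto
    qed
    also have "\<dots> = ennreal (\<Sum>m. r n m * g m / q)"
      by (rule suminf_ennreal2) (use rnn gb qpos summable_divide[OF sg] in auto)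
    also have "(\<Sum>m. r n m * g m / q) = (\<Sum>m. r n m * g m) / q"
      by (rule suminf_divide[OF sg])
    finally have e1: "(\<Sum>m. ennreal (r n m / q) * ennreal (g m)) = ennreal ((\<Sum>m. r n m * g m) / q)" .
    have nn1: "0 \<le> (\<Sum>m. r n m * g m) / q"
      using qpos by (intro divide_nonneg_nonneg suminf_nonneg sg) (use rnn gb in auto)
    have "ennreal ((\<Sum>m. r n m * g m) / q) + ennreal (\<epsilon> / q) = ennreal ((\<Sum>m. r n m * g m) / q + \<epsilon> / q)"
      using nn1 eps qpos by (subst ennreal_plus) auto
    also have "\<dots> \<le> ennreal (g n)"
    proof (rule ennreal_leI)
      have "(\<Sum>m. r n m * g m) / q + \<epsilon> / q = ((\<Sum>m. r n m * g m) + \<epsilon>) / q" by (simp add: add_divide_distrib)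
      also have "\<dots> \<le> g n" using key qpos by (simp add: pos_divide_le_eq mult.commute)
      finally show "(\<Sum>m. r n m * g m) / q + \<epsilon> / q \<le> g n" .
    qed
    finally show ?thesis unfolding q_def[symmetric] e1 .
  qed
  show ?thesis
  proof (intro allI impI)
    fix n0 :: nat and M :: "'a measure" and Y E
    assume "1 \<le> n0" and jhp: "jump_hold_process (N_rate lam_dens mu) n0 M Y E"
    show "AE x in M. summable (\<lambda>k. E k x / total_rate (N_rate lam_dens mu) (Y k x))"
      using explosion_core[OF jhp[folded r_def] rnn qnn eps drift] unfolding r_def .
  qed
qed


end
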